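(* Let $R=GR(4,m)$ with $m$ odd, $\mathcal{T}$ its Teichmüller set and $2R=\{2x:x\in R\}$. Counting ordered quadruples $(X,Y,Z,W)\in\mathcal{T}^4$: (a) the multiset $\{X+Y+Z+W\}$ contains $0$ with multiplicity $2^m$, each element of $2R\setminus\{0\}$ with multiplicity $2^m(2^m+1)$, and each element outside $2R$ with multiplicity $2^{2m}$; (b) the multiset $\{X+Y-Z-W\}$ contains $0$ with multiplicity $(2^{m+1}-1)2^m$, each element of $2R\setminus\{0\}$ with multiplicity $(2^m-1)2^m$, and each element outside $2R$ with multiplicity $2^{2m}$; (c) the multiset $\{X+Y+Z-W\}$ contains each element of $2R$ with multiplicity $2^{2m}$, each element of $(\mathcal{T}+\mathcal{T})\setminus 2R$ with multiplicity $(2^m+1)2^m$, and each element outside $\mathcal{T}+\mathcal{T}$ with multiplicity $(2^m-1)2^m$, where $\mathcal{T}+\mathcal{T}=\{X+Y:X,Y\in\mathcal{T}\}$ as a set.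
   Context: $R=GR(4,m)=\mathbb{Z}_4[x]/(f(x))$ with $f$ monic of degree $m$ irreducible mod 2. $\mathcal{T}=\{0,1,\beta,\dots,\beta^{2^m-2}\}$ where $\beta\in R^*$ has multiplicative order $2^m-1$ (Teichmüller set). *)

theory Defs
  imports "HOL-Library.Numeral_Type" "Berlekamp_Zassenhaus.Finite_Field"
    "HOL-Computational_Algebra.Polynomial"
begin

instance bit0 :: (finite) nontriv
  by intro_classes (simp add: Suc_lessI finite_UNIV_card_ge_0)

type_synonym z4 = "4 mod_ring"
type_synonym z2 = "bool mod_ring"

definition red2 :: "z4 \<Rightarrow> z2" where
  "red2 c = of_int (to_int_mod_ring c)"

text \<open>GR(4,m) = Z_4[x]/(f): elements represented by their canonical
  remainders modulo the monic polynomial f, i.e. polynomials of degree < deg f.\<close>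
definition gr_carrier :: "z4 poly \<Rightarrow> z4 poly set" where
  "gr_carrier f = {r. r = 0 \<or> degree r < degree f}"

definition gr_red :: "z4 poly \<Rightarrow> z4 poly \<Rightarrow> z4 poly" where
  "gr_red f p = (THE r. r \<in> gr_carrier f \<and> f dvd (p - r))"

text \<open>Multiplication and powers in GR(4,m) (addition is polynomial addition).\<close>
definition gr_mult :: "z4 poly \<Rightarrow> z4 poly \<Rightarrow> z4 poly \<Rightarrow> z4 poly" where
  "gr_mult f p q = gr_red f (p * q)"

definition gr_pow :: "z4 poly \<Rightarrow> z4 poly \<Rightarrow> nat \<Rightarrow> z4 poly" where
  "gr_pow f b k = gr_red f (b ^ k)"

definition gr_has_order :: "z4 poly \<Rightarrow> z4 poly \<Rightarrow> nat \<Rightarrow> bool" where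
  "gr_has_order f b n \<longleftrightarrow> b \<in> gr_carrier f \<and> gr_pow f b n = 1 \<and>
     (\<forall>k. 0 < k \<and> k < n \<longrightarrow> gr_pow f b k \<noteq> 1)"

definition teich :: "z4 poly \<Rightarrow> z4 poly \<Rightarrow> z4 poly set" where
  "teich f b = insert 0 ((\<lambda>k. gr_pow f b k) ` {..< 2 ^ degree f - 1})"

definition twoR :: "z4 poly \<Rightarrow> z4 poly set" where
  "twoR f = (\<lambda>x. gr_red f (2 * x)) ` gr_carrier f"

end

theory Submission
  imports Defs "Berlekamp_Zassenhaus.Distinct_Degree_Factorization"
begin

section \<open>Z4 coefficient facts\<close>

lemma z4_four[simp]: "(4::z4) = 0"
  using of_nat_card_eq_0[where 'a=4] by simp

lemma oimr_eq: "((of_int_mod_ring a :: 'a::finite mod_ring) = of_int_mod_ring b) \<longleftrightarrow> a mod CARD('a) = b mod CARD('a)"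
  by transfer simp

lemma num_oimr: "(numeral n :: 'a::nontriv mod_ring) = of_int_mod_ring (numeral n)"
  by (simp flip: of_int_of_int_mod_ring)

lemma one_oimr: "(1 :: 'a::nontriv mod_ring) = of_int_mod_ring 1"
  by (simp flip: of_int_of_int_mod_ring)

lemma z4_nums[simp]: "(5::z4) = 1" "(6::z4) = 2" "(9::z4) = 1" "(7::z4) = 3"
  by (simp_all only: num_oimr one_oimr oimr_eq, simp_all)

lemma z2_three[simp]: "(3::z2) = 1"
  by (simp_all only: num_oimr one_oimr oimr_eq, simp_all)

lemma z4_cases: "(c::z4) = 0 \<or> c = 1 \<or> c = 2 \<or> c = 3"
proof -
  have r: "to_int_mod_ring c \<in> {0..<4}"
    using range_to_int_mod_ring[where 'a=4] by auto
  have c: "c = of_int_mod_ring (to_int_mod_ring c)" by simp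
  have "to_int_mod_ring c \<in> {0,1,2,3}"
  proof -
    obtain k where k: "k = to_int_mod_ring c" by simp
    have "0 \<le> k" "k < 4" using r k by auto
    then have "k = 0 \<or> k = 1 \<or> k = 2 \<or> k = 3" by presburger
    then show ?thesis unfolding k by blast
  qed
  moreover have o: "of_int_mod_ring (0::int) = (0::z4)" "of_int_mod_ring (1::int) = (1::z4)"
     "of_int_mod_ring (2::int) = (2::z4)" "of_int_mod_ring (3::int) = (3::z4)"
    by (simp_all flip: of_int_of_int_mod_ring)
  ultimately show ?thesis using c by (simp only: insert_iff empty_iff) metis
qed

lemma z4_ti: "to_int_mod_ring (0::z4) = 0" "to_int_mod_ring (1::z4) = 1"
   "to_int_mod_ring (2::z4) = 2" "to_int_mod_ring (3::z4) = 3"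
proof -
  have "to_int_mod_ring (of_int_mod_ring (k::int) :: z4) = k" if "0 \<le> k" "k < 4" for k
    using that by (subst to_int_mod_ring_of_int_mod_ring) auto
  from this[of 0] this[of 1] this[of 2] this[of 3] show
   "to_int_mod_ring (0::z4) = 0" "to_int_mod_ring (1::z4) = 1"
   "to_int_mod_ring (2::z4) = 2" "to_int_mod_ring (3::z4) = 3"
    by (simp_all flip: of_int_of_int_mod_ring)
qed

lemma z2_two[simp]: "(2::z2) = 0"
  using of_nat_card_eq_0[where 'a=bool] by simp

lemma red2_vals[simp]: "red2 0 = 0" "red2 1 = 1" "red2 2 = 0" "red2 3 = 1"
  unfolding red2_def z4_ti by simp_all

lemma z2_one_one[simp]: "(1::z2) + 1 = 0"
  using z2_two by (metis one_add_one)

interpretation red2_hom: comm_ring_hom red2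
proof
  fix x y :: z4
  show "red2 (x + y) = red2 x + red2 y"
    using z4_cases[of x] z4_cases[of y] by (auto simp: add.commute)
  show "red2 (x * y) = red2 x * red2 y"
    using z4_cases[of x] z4_cases[of y] by (auto simp: mult.commute)
qed (simp_all add: red2_def z4_ti)

interpretation red2_phom: map_poly_comm_ring_hom red2 ..

definition hl :: "z4 \<Rightarrow> z4" where "hl c = of_int_mod_ring (to_int_mod_ring c div 2)"
definition hf :: "z4 \<Rightarrow> z2" where "hf c = of_int_mod_ring (to_int_mod_ring c div 2)"

lemma hl_vals[simp]: "hl 0 = 0" "hl 1 = 0" "hl 2 = 1" "hl 3 = 1"
  unfolding hl_def z4_ti by (simp_all flip: of_int_of_int_mod_ring)
lemma hf_vals[simp]: "hf 0 = 0" "hf 1 = 0" "hf 2 = 1" "hf 3 = 1"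
  unfolding hf_def z4_ti by (simp_all flip: of_int_of_int_mod_ring)

lemma z4_even: "red2 c = 0 \<Longrightarrow> c = 2 * hl c"
  using z4_cases[of c] by auto
lemma z4_hf2: "hf (2 * c) = red2 c"
  using z4_cases[of c] by auto
lemma z4_hf_inj: "red2 c = 0 \<Longrightarrow> red2 d = 0 \<Longrightarrow> hf c = hf d \<Longrightarrow> c = d"
  using z4_cases[of c] z4_cases[of d] by auto

abbreviation mu :: "z4 poly \<Rightarrow> z2 poly" where "mu p \<equiv> map_poly red2 p"

lemma poly_even: "mu p = 0 \<Longrightarrow> p = smult 2 (map_poly hl p)"
  by (rule poly_eqI) (metis coeff_map_poly coeff_smult coeff_0 hl_vals(1) red2_vals(1) z4_even)

lemma hf_smult2: "map_poly hf (smult 2 p) = mu p"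
  by (rule poly_eqI) (simp add: coeff_map_poly z4_hf2)

lemma hf_inj: "mu p = 0 \<Longrightarrow> mu p' = 0 \<Longrightarrow> map_poly hf p = map_poly hf p' \<Longrightarrow> p = p'"
proof (rule poly_eqI)
  fix n assume a: "mu p = 0" "mu p' = 0" "map_poly hf p = map_poly hf p'"
  have "red2 (coeff p n) = 0" using arg_cong[OF a(1), of "\<lambda>x. coeff x n"] by (simp add: coeff_map_poly)
  moreover have "red2 (coeff p' n) = 0" using arg_cong[OF a(2), of "\<lambda>x. coeff x n"] by (simp add: coeff_map_poly)
  moreover have "hf (coeff p n) = hf (coeff p' n)" using arg_cong[OF a(3), of "\<lambda>x. coeff x n"] by (simp add: coeff_map_poly)
  ultimately show "coeff p n = coeff p' n" by (rule z4_hf_inj)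
qed

lemma sq_kill: assumes "(4::'a::comm_ring_1) = 0" shows "(a + 2*c)^2 = (a::'a)^2"
proof -
  have "(a + 2*c)^2 = a^2 + 4*(a*c+c*c)" by (simp add: power2_eq_square algebra_simps)
  then show ?thesis using assms by simp
qed

lemma pow2_sum: assumes "(4::'a::comm_ring_1) = 0"
  shows "((a::'a)+b)^(2^Suc k) = a^(2^Suc k) + b^(2^Suc k) + 2*(a*b)^(2^k)"
proof (induction k)
  case 0
  show ?case by (simp add: power2_eq_square algebra_simps)
next
  case (Suc k)
  have e: "x^(2^Suc (Suc k)) = (x^(2^Suc k))^2" for x :: 'a
    by (simp add: power_mult[symmetric] mult.commute)
  have "(a+b)^(2^Suc (Suc k)) = (a^(2^Suc k) + b^(2^Suc k) + 2*(a*b)^(2^k))^2"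
    by (simp only: e Suc.IH)
  also have "\<dots> = (a^(2^Suc k) + b^(2^Suc k))^2" by (rule sq_kill[OF assms])
  also have "\<dots> = (a^(2^Suc k))^2 + (b^(2^Suc k))^2 + 2*((a*b)^(2^Suc k))"
    by (simp add: power2_eq_square algebra_simps power_mult_distrib)
  finally show ?case by (simp only: e[of a] e[of b])
qed

lemma z4poly_four[simp]: "(4::z4 poly) = 0"
  by (simp add: numeral_poly)

lemma dvd_pow_diff: "(f::'a::comm_ring_1) dvd a - b \<Longrightarrow> f dvd a^n - b^n"
proof (induction n)
  case (Suc n)
  have "a^Suc n - b^Suc n = a*(a^n - b^n) + (a - b)*b^n" by (simp add: algebra_simps)
  then show ?case using Suc by simp
qed simp

locale grf =
  fixes f :: "z4 poly"
  assumes monic: "lead_coeff f = 1" and degpos: "degree f > 0"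
begin

abbreviation C where "C \<equiv> gr_carrier f"

lemma C_iff: "p \<in> C \<longleftrightarrow> degree p < degree f"
  using degpos unfolding gr_carrier_def by auto

lemma dvd_small: assumes "f dvd p" "degree p < degree f" shows "p = 0"
proof (rule ccontr)
  assume p: "p \<noteq> 0"
  from assms(1) obtain k where k: "p = f * k" by (auto elim: dvdE)
  with p have k0: "k \<noteq> 0" by auto
  have "coeff p (degree f + degree k) = lead_coeff k"
    unfolding k coeff_mult_degree_sum using monic by simp
  with k0 have "degree f + degree k \<le> degree p" by (intro le_degree) simp
  with assms(2) show False by simp
qed

lemma gr_red_ex1: "\<exists>!r. r \<in> C \<and> f dvd (p - r)"
proof -
  obtain qq r where pd: "pseudo_divmod p f = (qq, r)" by (cases "pseudo_divmod p f")
  have f0: "f \<noteq> 0" using degpos by auto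
  have "smult (lead_coeff f ^ (Suc (degree p) - degree f)) p = f * qq + r"
    by (rule pseudo_divmod(1)[OF f0 pd])
  then have e: "p = f * qq + r" using monic by simp
  have "r = 0 \<or> degree r < degree f" by (rule pseudo_divmod(2)[OF f0 pd])
  then have rC: "r \<in> C" unfolding gr_carrier_def by auto
  have "f dvd p - r" using e by simp
  moreover {
    fix r' assume "r' \<in> C" "f dvd p - r'"
    moreover have "r - r' = (p - r') - (p - r)" by simp
    ultimately have "f dvd r - r'" using \<open>f dvd p - r\<close> by (metis dvd_diff)
    moreover have "degree (r - r') < degree f" using rC \<open>r' \<in> C\<close> C_iff
      by (simp add: degree_diff_less)
    ultimately have "r - r' = 0" using dvd_small by blast
    then have "r' = r" by simp
  }
  ultimately show ?thesis using rC by blast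
qed

lemma gr_red: "gr_red f p \<in> C" "f dvd p - gr_red f p"
  using theI'[OF gr_red_ex1[of p]] unfolding gr_red_def by auto

lemma gr_red_unique: "r \<in> C \<Longrightarrow> f dvd p - r \<Longrightarrow> gr_red f p = r"
  using gr_red gr_red_ex1[of p] by blast

lemma gr_red_id: "r \<in> C \<Longrightarrow> gr_red f r = r"
  by (rule gr_red_unique) auto

lemma gr_red_eq_iff: "gr_red f p = gr_red f p' \<longleftrightarrow> f dvd p - p'"
proof
  assume "gr_red f p = gr_red f p'"
  moreover have "p - p' = (p - gr_red f p) - (p' - gr_red f p') + (gr_red f p - gr_red f p')" by simp
  ultimately show "f dvd p - p'" using gr_red(2)[of p] gr_red(2)[of p'] by (metis dvd_diff dvd_add diff_self dvd_0_right)
next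
  assume a: "f dvd p - p'"
  have "p - gr_red f p' = (p - p') + (p' - gr_red f p')" by simp
  then have "f dvd p - gr_red f p'" using a gr_red(2)[of p'] by (metis dvd_add)
  then show "gr_red f p = gr_red f p'" using gr_red(1) gr_red_unique by blast
qed

lemma C_0[simp]: "0 \<in> C" and C_1[simp]: "1 \<in> C" using degpos by (auto simp: C_iff)
lemma C_add: "a \<in> C \<Longrightarrow> b \<in> C \<Longrightarrow> a + b \<in> C"
  by (simp add: C_iff degree_add_less)
lemma C_uminus: "a \<in> C \<Longrightarrow> - a \<in> C"
  by (simp add: C_iff)
lemma C_diff: "a \<in> C \<Longrightarrow> b \<in> C \<Longrightarrow> a - b \<in> C"
  by (metis C_add C_uminus diff_conv_add_uminus)
lemma C_smult: "a \<in> C \<Longrightarrow> smult c a \<in> C"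
  by (simp add: C_iff) (meson degree_smult_le le_less_trans)

end

lemma z2p_two[simp]: "(2::z2 poly) = 0"
  by (simp add: numeral_poly)

lemma z2p_add_self[simp]: "(x::z2 poly) + x = 0"
  by (metis mult_2 z2p_two mult_zero_left)

lemma z2p_uminus[simp]: "- (x::z2 poly) = x"
  by (metis add_eq_0_iff z2p_add_self)

lemma z2p_minus: "(a::z2 poly) - b = a + b"
  by (metis diff_conv_add_uminus z2p_uminus)

lemma z2p_sq_add: "((a::z2 poly) + b)^2 = a^2 + b^2"
proof -
  have "(a+b)^2 = a^2 + b^2 + 2*(a*b)" by (simp add: power2_eq_square algebra_simps)
  then show ?thesis by simp
qed

lemma z2p_add_self2[simp]: "(x::z2 poly) + (x + y) = y"
  by (metis add.assoc add_0 z2p_add_self)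

definition Bn :: "nat \<Rightarrow> 'a::zero poly set" where "Bn n = {p. \<forall>i\<ge>n. coeff p i = 0}"

lemma Bn_Suc: "(Bn (Suc n) :: 'a::zero poly set) = (\<lambda>(a,p). pCons a p) ` ((UNIV :: 'a set) \<times> Bn n)"
proof (rule Set.set_eqI)
  fix p :: "'a poly"
  obtain a p' where p: "p = pCons a p'" by (cases p) auto
  have "p \<in> Bn (Suc n) \<longleftrightarrow> p' \<in> Bn n"
  proof
    assume "p \<in> Bn (Suc n)"
    then have "\<forall>i\<ge>Suc n. coeff p i = 0" unfolding Bn_def by simp
    then have "\<forall>i\<ge>n. coeff p' i = 0" unfolding p
    proof (intro allI impI)
      fix i assume h: "\<forall>i\<ge>Suc n. coeff (pCons a p') i = 0" and "n \<le> i"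
      have "Suc i \<ge> Suc n" using \<open>n \<le> i\<close> by simp
      then have "coeff (pCons a p') (Suc i) = 0" using h by blast
      then show "coeff p' i = 0" by simp
    qed
    then show "p' \<in> Bn n" unfolding Bn_def by simp
  next
    assume "p' \<in> Bn n"
    then have a: "\<forall>i\<ge>n. coeff p' i = 0" unfolding Bn_def by simp
    have "coeff p i = 0" if "i \<ge> Suc n" for i
    proof -
      obtain j where j: "i = Suc j" "j \<ge> n" using \<open>i \<ge> Suc n\<close> by (cases i) auto
      then show ?thesis unfolding p using a by simp
    qed
    then show "p \<in> Bn (Suc n)" unfolding Bn_def by simp
  qed
  then show "p \<in> Bn (Suc n) \<longleftrightarrow> p \<in> (\<lambda>(a,p). pCons a p) ` ((UNIV :: 'a set) \<times> Bn n)"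
    unfolding p by auto
qed

lemma Bn_card: "finite (Bn n :: 'a::{finite,zero} poly set) \<and> card (Bn n :: 'a poly set) = CARD('a)^n"
proof (induction n)
  case 0
  have "Bn 0 = {0::'a poly}" unfolding Bn_def by (auto simp: poly_eq_iff)
  then show ?case by simp
next
  case (Suc n)
  have inj: "inj_on (\<lambda>(a,p). pCons a p) ((UNIV :: 'a set) \<times> (Bn n :: 'a poly set))"
    by (auto simp: inj_on_def)
  have "card (Bn (Suc n) :: 'a poly set) = card ((UNIV :: 'a set) \<times> (Bn n :: 'a poly set))"
    unfolding Bn_Suc by (rule card_image[OF inj])
  also have "\<dots> = CARD('a) * CARD('a)^n" using Suc by (simp add: card_cartesian_product)
  finally show ?case using Suc unfolding Bn_Suc by simp
qed

lemma Bn_deg: assumes "n > 0" shows "Bn n = {p. degree p < n}"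
proof (intro Set.set_eqI iffI)
  fix p :: "'a poly" assume "p \<in> Bn n"
  then have "\<forall>i\<ge>n. coeff p i = 0" unfolding Bn_def by simp
  then show "p \<in> {p. degree p < n}" using \<open>n > 0\<close>
  proof (cases "p = 0")
    case False
    then have "coeff p (degree p) \<noteq> 0" by simp
    with \<open>\<forall>i\<ge>n. coeff p i = 0\<close> have "\<not> degree p \<ge> n" by blast
    then show ?thesis by simp
  qed simp
next
  fix p :: "'a poly" assume "p \<in> {p. degree p < n}"
  then have d: "degree p < n" by simp
  have "coeff p i = 0" if "i \<ge> n" for i using d that by (intro coeff_eq_0) simp
  then show "p \<in> Bn n" unfolding Bn_def by simp
qed

locale ff =
  fixes g :: "z2 poly" and m :: nat
  assumes dg: "degree g = m" and irr: "irreducible g" and oddm: "odd m"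
    and fermat_CF0: "\<And>x. degree x < m \<Longrightarrow> x^(2^m) mod g = x"
begin

abbreviation q where "q \<equiv> (2::nat)^m"
definition CF :: "z2 poly set" where "CF = {p. degree p < m}"

lemma m_pos: "m > 0" using oddm by (cases m) auto

lemma prime_g: "prime_elem g" by (rule irreducible_imp_prime_elem[OF irr])

lemma g_dvd_mult: "g dvd a * b \<longleftrightarrow> g dvd a \<or> g dvd b"
  by (rule prime_elem_dvd_mult_iff[OF prime_g])

lemma g_dvd_pow: "g dvd a ^ n \<Longrightarrow> g dvd a"
  by (rule prime_elem_dvd_power[OF prime_g])

lemma CF_mod: "p \<in> CF \<Longrightarrow> p mod g = p"
  unfolding CF_def by (simp add: mod_poly_less dg)

lemma mod_CF: "p mod g \<in> CF"
proof -
  have "g \<noteq> 0" using m_pos dg by auto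
  then show ?thesis unfolding CF_def using m_pos dg
    by (cases "p mod g = 0") (auto simp: degree_mod_less')
qed

lemma finite_CF[simp]: "finite CF" and card_CF: "card CF = q"
  using Bn_card[of m, where 'a=z2] Bn_deg[OF m_pos, where 'a=z2] unfolding CF_def by auto

lemma CF_0[simp]: "0 \<in> CF" unfolding CF_def using m_pos by simp
lemma CF_1[simp]: "1 \<in> CF" unfolding CF_def using m_pos by simp
lemma CF_add[simp]: "a \<in> CF \<Longrightarrow> b \<in> CF \<Longrightarrow> a + b \<in> CF"
  unfolding CF_def by (simp add: degree_add_less)

lemma CF_eq: "a \<in> CF \<Longrightarrow> b \<in> CF \<Longrightarrow> a = b \<longleftrightarrow> g dvd a - b"
  by (metis CF_mod mod_eq_dvd_iff)

lemma CF_eq_mod: "a \<in> CF \<Longrightarrow> a = b mod g \<longleftrightarrow> g dvd a - b"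
  by (metis CF_mod mod_eq_dvd_iff)

lemma mod_eq_iff: "a mod g = b mod g \<longleftrightarrow> g dvd a + b"
  by (simp add: mod_eq_dvd_iff z2p_minus)

lemma CF_zero_iff: "a \<in> CF \<Longrightarrow> a = 0 \<longleftrightarrow> g dvd a"
  using CF_eq[of a 0] by simp

lemma fermat_CF: "x \<in> CF \<Longrightarrow> x^q mod g = x"
  using fermat_CF0 unfolding CF_def by simp

lemma fermat: "x^q mod g = x mod g"
proof -
  have "x^q mod g = (x mod g)^q mod g" by (simp add: power_mod)
  also have "\<dots> = x mod g" using fermat_CF[OF mod_CF[of x]] .
  finally show ?thesis .
qed

lemma frob_add: "(a + b)^(2^k) = (a::z2 poly)^(2^k) + b^(2^k)"
  using add_power_prime_poly_mod_ring[of a b k] by simp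

lemma sq_inj: "a^2 mod g = b^2 mod g \<Longrightarrow> a mod g = b mod g"
proof -
  assume "a^2 mod g = b^2 mod g"
  then have "g dvd a^2 + b^2" by (simp add: mod_eq_iff)
  then have "g dvd (a+b)^2" by (simp add: z2p_sq_add)
  then have "g dvd a + b" by (rule g_dvd_pow)
  then show ?thesis by (simp add: mod_eq_iff)
qed

end

context ff
begin

lemma dvd_sq: "g dvd x \<Longrightarrow> g dvd x^2"
  by (simp add: power2_eq_square)

lemma not_dvd_1: "\<not> g dvd 1"
proof
  assume "g dvd 1"
  moreover have "g \<noteq> 0" using dg m_pos by auto
  ultimately have "degree g = 0" using is_unit_iff_degree by blast
  then show False using dg m_pos by simp
qed

lemma CF_nz: "a \<in> CF \<Longrightarrow> a \<noteq> 0 \<Longrightarrow> \<not> g dvd a"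
  using CF_zero_iff by blast

lemma CF_eq2: "a \<in> CF \<Longrightarrow> b \<in> CF \<Longrightarrow> a = b \<longleftrightarrow> g dvd a + b"
  using CF_eq[of a b] by (simp add: z2p_minus)

lemma mod_dvd: "g dvd (x mod g) + x"
  by (metis mod_eq_iff mod_mod_trivial)

lemma q_ge2: "q \<ge> 2" using m_pos by (simp add: self_le_power)

definition finv :: "z2 poly \<Rightarrow> z2 poly" where "finv a = a^(q-2) mod g"

lemma finv_CF: "finv a \<in> CF" unfolding finv_def by (rule mod_CF)

lemma finv_mul: assumes "a \<in> CF" "a \<noteq> 0" shows "g dvd a * finv a + 1"
proof -
  have "g dvd a^q + a" using fermat_CF[OF assms(1)] mod_eq_iff[of "a^q" a] CF_mod[OF assms(1)] by simp
  moreover have "a^q + a = a * (a^(q-1) + 1)"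
  proof -
    have "q = Suc (q - 1)" using q_ge2 by simp
    then have "a^q = a * a^(q-1)" by (metis power_Suc)
    then show ?thesis by (simp add: algebra_simps)
  qed
  ultimately have "g dvd a * (a^(q-1) + 1)" by simp
  then have h: "g dvd a^(q-1) + 1" using g_dvd_mult CF_nz[OF assms] by blast
  have "q - 1 = Suc (q - 2)" using q_ge2 by simp
  then have "a^(q-1) = a * a^(q-2)" by (metis power_Suc)
  then have e: "a * finv a + 1 = (a^(q-1) + 1) + a * (finv a + a^(q-2))"
    by (simp add: algebra_simps)
  have m: "g dvd finv a + a^(q-2)" unfolding finv_def by (rule mod_dvd)
  show ?thesis unfolding e using dvd_add[OF h dvd_mult[OF m]] .
qed

lemma lin_unique:
  assumes "\<alpha> \<in> CF" "\<alpha> \<noteq> 0"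
  shows "{z \<in> CF. g dvd c + \<alpha> * z + D} = {(finv \<alpha> * (D + c)) mod g}"
proof -
  let ?z0 = "(finv \<alpha> * (D + c)) mod g"
  have z0: "?z0 \<in> CF" by (rule mod_CF)
  have "c + \<alpha> * ?z0 + D = \<alpha> * (?z0 + finv \<alpha> * (D + c)) + (\<alpha> * finv \<alpha> + 1) * (D + c)"
    by (simp add: algebra_simps)
  moreover have "g dvd ?z0 + finv \<alpha> * (D + c)" by (rule mod_dvd)
  ultimately have in0: "g dvd c + \<alpha> * ?z0 + D" using finv_mul[OF assms] by simp
  have uniq: "z = ?z0" if "z \<in> CF" "g dvd c + \<alpha> * z + D" for z
  proof -
    have "(c + \<alpha> * z + D) + (c + \<alpha> * ?z0 + D) = \<alpha> * (z + ?z0)" by (simp add: algebra_simps)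
    then have "g dvd \<alpha> * (z + ?z0)" using in0 that(2) by (metis dvd_add)
    then have "g dvd z + ?z0" using g_dvd_mult CF_nz[OF assms] by blast
    then show ?thesis using CF_eq2[OF that(1) z0] by simp
  qed
  show ?thesis using in0 z0 uniq by blast
qed

lemma lin_card:
  assumes "\<alpha> \<in> CF" "\<alpha> \<noteq> 0"
  shows "card {z \<in> CF. g dvd c + \<alpha> * z + D} = 1"
  using lin_unique[OF assms] by simp

lemma sqrt_unique: "\<exists>z0\<in>CF. {z \<in> CF. g dvd z^2 + D} = {z0}"
proof -
  define h where "h = q div 2"
  have qh: "q = 2 * h" unfolding h_def using m_pos by (cases m) auto
  let ?z0 = "D^h mod g"
  have z0: "?z0 \<in> CF" by (rule mod_CF)
  have "g dvd ?z0 + D^h" by (rule mod_dvd)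
  then have "g dvd (?z0 + D^h)^2" by (rule dvd_sq)
  then have a: "g dvd ?z0^2 + D^q" unfolding z2p_sq_add qh by (simp add: power_mult[symmetric] mult.commute)
  have b: "g dvd D^q + D" using fermat[of D] mod_eq_iff by simp
  have "?z0^2 + D = (?z0^2 + D^q) + (D^q + D)" by simp
  then have in0: "g dvd ?z0^2 + D" using a b by (metis dvd_add)
  have uniq: "z = ?z0" if "z \<in> CF" "g dvd z^2 + D" for z
  proof -
    have "(z^2 + D) + (?z0^2 + D) = (z + ?z0)^2" by (simp add: z2p_sq_add)
    then have "g dvd (z + ?z0)^2" using in0 that(2) by (metis dvd_add)
    then have "g dvd z + ?z0" by (rule g_dvd_pow)
    then show ?thesis using CF_eq2[OF that(1) z0] by simp
  qed
  show ?thesis using in0 z0 uniq by blast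
qed

lemma sqrt_card: "card {z \<in> CF. g dvd z^2 + D} = 1"
  using sqrt_unique[of D] by auto

end

context ff
begin

lemma pair_Sigma: "{(u,v). u \<in> CF \<and> v \<in> CF \<and> P u v} = Sigma CF (\<lambda>u. {v \<in> CF. P u v})"
  by auto

lemma sum_CF_split: "(\<Sum>u\<in>CF. f u) = f 0 + (\<Sum>u\<in>CF - {0}. f u)"
  by (simp add: sum.remove)

lemma card_CF0: "card (CF - {0}) = q - 1"
  by (simp add: card_CF)

lemma prod_card: "card {(u,v). u \<in> CF \<and> v \<in> CF \<and> g dvd u * v + D} = (if g dvd D then 2*q - 1 else q - 1)"
proof -
  have fin: "\<forall>u\<in>CF. finite {v \<in> CF. g dvd u * v + D}" by simp
  have "card {(u,v). u \<in> CF \<and> v \<in> CF \<and> g dvd u * v + D} = (\<Sum>u\<in>CF. card {v \<in> CF. g dvd u * v + D})"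
    unfolding pair_Sigma by (rule card_SigmaI[OF finite_CF fin])
  also have "\<dots> = card {v \<in> CF. g dvd D} + (\<Sum>u\<in>CF - {0}. card {v \<in> CF. g dvd u * v + D})"
    by (subst sum_CF_split) simp
  also have "(\<Sum>u\<in>CF - {0}. card {v \<in> CF. g dvd u * v + D}) = (\<Sum>u\<in>CF - {0}. 1)"
  proof (rule sum.cong)
    fix u assume "u \<in> CF - {0}"
    then show "card {v \<in> CF. g dvd u * v + D} = 1" using lin_card[of u 0 D] by simp
  qed simp
  also have "(\<Sum>u\<in>CF - {0}. (1::nat)) = q - 1" using card_CF0 by simp
  finally have e: "card {(u,v). u \<in> CF \<and> v \<in> CF \<and> g dvd u * v + D} = card {v \<in> CF. g dvd D} + (q - 1)" .
  show ?thesis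
  proof (cases "g dvd D")
    case True
    then have "{v \<in> CF. g dvd D} = CF" by auto
    then show ?thesis using e True card_CF q_ge2 by simp
  next
    case False
    then show ?thesis using e by simp
  qed
qed

text \<open>m odd: t^2+t+1 has no root\<close>
lemma no_cube_root: "\<not> g dvd t^2 + t + 1"
proof
  assume h: "g dvd t^2 + t + 1"
  have step: "g dvd t^(2^k) + t + (if even k then 0 else 1)" for k
  proof (induction k)
    case 0 then show ?case by simp
  next
    case (Suc k)
    have sq: "(t^(2^k))^2 = t^(2^Suc k)" by (simp add: power_mult[symmetric] mult.commute)
    show ?case
    proof (cases "even k")
      case True
      with Suc have "g dvd t^(2^k) + t" by simp
      then have "g dvd (t^(2^k) + t)^2" by (rule dvd_sq)
      then have a: "g dvd t^(2^Suc k) + t^2" unfolding z2p_sq_add sq .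
      have "t^(2^Suc k) + t + 1 = (t^(2^Suc k) + t^2) + (t^2 + t + 1)" by simp
      then have "g dvd t^(2^Suc k) + t + 1" using a h by (metis dvd_add)
      then show ?thesis using True by simp
    next
      case False
      with Suc have "g dvd t^(2^k) + t + 1" by simp
      then have "g dvd (t^(2^k) + t + 1)^2" by (rule dvd_sq)
      then have a: "g dvd t^(2^Suc k) + t^2 + 1" unfolding z2p_sq_add sq by simp
      have "t^(2^Suc k) + t = (t^(2^Suc k) + t^2 + 1) + (t^2 + t + 1)" by simp
      then have "g dvd t^(2^Suc k) + t" using a h by (metis dvd_add)
      then show ?thesis using False by simp
    qed
  qed
  from step[of m] oddm have a: "g dvd t^q + t + 1" by simp
  have b: "g dvd t^q + t" using fermat[of t] mod_eq_iff by simp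
  have "1 = (t^q + t + 1) + (t^q + t)" by simp
  then have "g dvd 1" using a b by (metis dvd_add)
  then show False using not_dvd_1 by simp
qed

end

context ff
begin

lemma quad_ident: "(u::z2 poly)^2 + u*v + v^2 + v^2*(t^2+t+1) = (u + t*v)*(u + t*v + v)"
  by (simp add: algebra_simps power2_eq_square)

lemma phi_prop: assumes "v \<in> CF" "v \<noteq> 0" shows "g dvd ((u * finv v) mod g) * v + u"
proof -
  let ?t = "(u * finv v) mod g"
  have "?t * v + u = (?t + u * finv v) * v + u * (v * finv v + 1)"
    by (simp add: algebra_simps)
  moreover have "g dvd ?t + u * finv v" by (rule mod_dvd)
  moreover have "g dvd v * finv v + 1" by (rule finv_mul[OF assms])
  ultimately show ?thesis by (metis dvd_add dvd_mult dvd_mult2)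
qed

lemma Q_cong: assumes "g dvd t*v + u" shows "g dvd u^2 + u*v + v^2 + v^2*(t^2+t+1)"
  unfolding quad_ident using assms by (simp add: add.commute)

lemma quad_card:
  "card {(u,v). u \<in> CF \<and> v \<in> CF \<and> g dvd u^2 + u*v + v^2 + D} = (if g dvd D then 1 else q + 1)"
proof -
  define S where "S = {(u,v). u \<in> CF \<and> v \<in> CF \<and> g dvd u^2 + u*v + v^2 + D}"
  define A where "A = {(u,v). (u,v) \<in> S \<and> v = 0}"
  define B where "B = {(u,v). (u,v) \<in> S \<and> v \<noteq> 0}"
  have SAB: "S = A \<union> B" "A \<inter> B = {}" unfolding A_def B_def by auto
  have finS: "finite S" unfolding S_def by (rule finite_subset[of _ "CF \<times> CF"]) auto
  have "A = (\<lambda>u. (u,0)) ` {u \<in> CF. g dvd u^2 + D}" unfolding A_def S_def by auto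
  then have cA: "card A = 1" using sqrt_card[of D] by (simp add: card_image inj_on_def)
  have key: "g dvd u^2 + u*v + v^2 + v^2*(t^2+t+1)" if "v \<in> CF" "v \<noteq> 0" "t = (u * finv v) mod g" for u v t
    using Q_cong phi_prop[OF that(1,2)] that(3) by blast
  show ?thesis
  proof (cases "g dvd D")
    case True
    have "B = {}"
    proof (rule ccontr)
      assume "B \<noteq> {}"
      then obtain u v where uv: "u \<in> CF" "v \<in> CF" "v \<noteq> 0" "g dvd u^2 + u*v + v^2 + D" unfolding B_def S_def by auto
      let ?t = "(u * finv v) mod g"
      have k: "g dvd u^2 + u*v + v^2 + v^2*(?t^2+?t+1)" using key[OF uv(2,3)] by blast
      have "v^2*(?t^2+?t+1) = (u^2 + u*v + v^2 + v^2*(?t^2+?t+1)) + (u^2 + u*v + v^2 + D) + D" by simp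
      then have "g dvd v^2*(?t^2+?t+1)" using k uv(4) True by (metis dvd_add)
      then have "g dvd v^2 \<or> g dvd ?t^2+?t+1" using g_dvd_mult by blast
      then show False using no_cube_root g_dvd_pow CF_nz[OF uv(2,3)] by blast
    qed
    then show ?thesis using SAB cA True unfolding S_def by simp
  next
    case False
    define \<phi> where "\<phi> = (\<lambda>(u,v). (u * finv v) mod g)"
    have "bij_betw \<phi> B CF"
    proof (rule bij_betw_imageI)
      show "inj_on \<phi> B"
      proof (rule inj_onI)
        fix x y assume x: "x \<in> B" and y: "y \<in> B" and e: "\<phi> x = \<phi> y"
        obtain u v where xu: "x = (u,v)" by (cases x)
        obtain u' v' where yu: "y = (u',v')" by (cases y)
        let ?t = "(u * finv v) mod g"
        have uv: "u \<in> CF" "v \<in> CF" "v \<noteq> 0" "g dvd u^2 + u*v + v^2 + D" using x xu unfolding B_def S_def by auto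
        have uv': "u' \<in> CF" "v' \<in> CF" "v' \<noteq> 0" "g dvd u'^2 + u'*v' + v'^2 + D" using y yu unfolding B_def S_def by auto
        have tt: "(u' * finv v') mod g = ?t" using e xu yu unfolding \<phi>_def by simp
        have p1: "g dvd ?t * v + u" using phi_prop[OF uv(2,3)] .
        have p2: "g dvd ?t * v' + u'" using phi_prop[OF uv'(2,3), of u'] tt by simp
        have k1: "g dvd u^2 + u*v + v^2 + v^2*(?t^2+?t+1)" using Q_cong[OF p1] .
        have k2: "g dvd u'^2 + u'*v' + v'^2 + v'^2*(?t^2+?t+1)" using Q_cong[OF p2] .
        have "(v + v')^2 * (?t^2+?t+1) = (u^2 + u*v + v^2 + v^2*(?t^2+?t+1)) + (u^2 + u*v + v^2 + D)
            + (u'^2 + u'*v' + v'^2 + v'^2*(?t^2+?t+1)) + (u'^2 + u'*v' + v'^2 + D)"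
          by (simp add: algebra_simps power2_eq_square)
        then have "g dvd (v + v')^2 * (?t^2+?t+1)" using k1 k2 uv(4) uv'(4) by (metis dvd_add)
        then have "g dvd (v + v')^2" using g_dvd_mult no_cube_root by blast
        then have "g dvd v + v'" by (rule g_dvd_pow)
        then have vv: "v = v'" using CF_eq2 uv(2) uv'(2) by blast
        have "u + u' = (?t * v + u) + (?t * v' + u')" using vv by simp
        then have "g dvd u + u'" using p1 p2 by (metis dvd_add)
        then have "u = u'" using CF_eq2 uv(1) uv'(1) by blast
        then show "x = y" using xu yu vv by simp
      qed
      show "\<phi> ` B = CF"
      proof (rule Set.set_eqI, rule iffI)
        fix t assume "t \<in> \<phi> ` B"
        then show "t \<in> CF" unfolding \<phi>_def by (auto simp: mod_CF)
      next
        fix t assume t: "t \<in> CF"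
        define r where "r = t^2 + t + 1"
        have nr: "\<not> g dvd r" unfolding r_def by (rule no_cube_root)
        have r0: "r mod g \<noteq> 0" using nr by (simp add: mod_eq_0_iff_dvd)
        have rc: "r mod g \<in> CF" "r mod g \<noteq> 0" using mod_CF r0 by auto
        define w where "w = finv (r mod g)"
        have rw: "g dvd (r mod g) * w + 1" unfolding w_def by (rule finv_mul[OF rc])
        have rw2: "g dvd r * w + 1"
        proof -
          have "r * w + 1 = ((r mod g) * w + 1) + ((r mod g) + r) * w" by (simp add: algebra_simps)
          then show ?thesis using rw mod_dvd[of r] by (metis dvd_add dvd_mult2)
        qed
        obtain v where v: "v \<in> CF" "{z \<in> CF. g dvd z^2 + D * w} = {v}" using sqrt_unique[of "D*w"] by blast
        then have vsq: "g dvd v^2 + D * w" by blast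
        have v0: "v \<noteq> 0"
        proof
          assume "v = 0"
          then have "g dvd D * w" using vsq by simp
          then have "g dvd w" using False g_dvd_mult by blast
          then have "g dvd r * w" by simp
          then have "g dvd 1" using rw2 by (metis dvd_add_right_iff)
          then show False using not_dvd_1 by simp
        qed
        define u where "u = (t * v) mod g"
        have u: "u \<in> CF" unfolding u_def by (rule mod_CF)
        have tvu: "g dvd t * v + u" unfolding u_def using mod_dvd[of "t*v"] by (simp add: add.commute)
        have Qr: "g dvd u^2 + u*v + v^2 + v^2*r" using Q_cong[OF tvu] unfolding r_def .
        have "u^2 + u*v + v^2 + D = (u^2 + u*v + v^2 + v^2*r) + r * (v^2 + D * w) + D * (r * w + 1)"
          by (simp add: algebra_simps power2_eq_square)
        then have Q: "g dvd u^2 + u*v + v^2 + D" using Qr vsq rw2 by (metis dvd_add dvd_mult)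
        have inB: "(u,v) \<in> B" unfolding B_def S_def using u v(1) v0 Q by simp
        have "\<phi> (u,v) = t"
        proof -
          have "t + u * finv v = (t * v + u) * finv v + t * (v * finv v + 1)" by (simp add: algebra_simps)
          then have "g dvd t + u * finv v" using tvu finv_mul[OF v(1) v0] by (metis dvd_add dvd_mult dvd_mult2)
          then have "t = (u * finv v) mod g" using CF_eq_mod[OF t] by (simp add: z2p_minus)
          then show ?thesis unfolding \<phi>_def by simp
        qed
        then show "t \<in> \<phi> ` B" using inB by force
      qed
    qed
    then have cB: "card B = q" using bij_betw_same_card card_CF by metis
    have "finite A" "finite B" using finS SAB by auto
    then have "card S = card A + card B" using SAB card_Un_disjoint by metis
    then show ?thesis using cA cB False unfolding S_def by simp
  qed
qed

lemma artin_card: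
  assumes "\<alpha> \<in> CF" "\<alpha> \<noteq> 0"
  shows "card {z \<in> CF. g dvd z^2 + \<alpha>*z + D} = (if \<exists>z\<in>CF. g dvd z^2 + \<alpha>*z + D then 2 else 0)"
proof (cases "\<exists>z\<in>CF. g dvd z^2 + \<alpha>*z + D")
  case True
  then obtain z0 where z0: "z0 \<in> CF" "g dvd z0^2 + \<alpha>*z0 + D" by blast
  have z1: "z0 + \<alpha> \<in> CF" using z0(1) assms(1) by simp
  have "(z0 + \<alpha>)^2 + \<alpha>*(z0 + \<alpha>) + D = z0^2 + \<alpha>*z0 + D" by (simp add: algebra_simps power2_eq_square)
  then have z1d: "g dvd (z0 + \<alpha>)^2 + \<alpha>*(z0 + \<alpha>) + D" using z0(2) by simp
  have ne: "z0 \<noteq> z0 + \<alpha>" using assms(2) by simp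
  have "{z \<in> CF. g dvd z^2 + \<alpha>*z + D} = {z0, z0 + \<alpha>}"
  proof (rule Set.set_eqI, rule iffI)
    fix z assume "z \<in> {z \<in> CF. g dvd z^2 + \<alpha>*z + D}"
    then have z: "z \<in> CF" "g dvd z^2 + \<alpha>*z + D" by auto
    have "(z + z0) * (z + (z0 + \<alpha>)) = (z^2 + \<alpha>*z + D) + (z0^2 + \<alpha>*z0 + D)"
      by (simp add: algebra_simps power2_eq_square)
    then have "g dvd (z + z0) * (z + (z0 + \<alpha>))" using z(2) z0(2) by (metis dvd_add)
    then have "g dvd z + z0 \<or> g dvd z + (z0 + \<alpha>)" using g_dvd_mult by blast
    then show "z \<in> {z0, z0 + \<alpha>}" using CF_eq2[OF z(1) z0(1)] CF_eq2[OF z(1) z1] by blast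
  next
    fix z assume "z \<in> {z0, z0 + \<alpha>}"
    then show "z \<in> {z \<in> CF. g dvd z^2 + \<alpha>*z + D}" using z0 z1 z1d by auto
  qed
  then show ?thesis using ne True by simp
next
  case False
  then have "{z \<in> CF. g dvd z^2 + \<alpha>*z + D} = {}" by auto
  then show ?thesis using False by simp
qed

end

definition e2 :: "z2 poly \<Rightarrow> z2 poly \<Rightarrow> z2 poly \<Rightarrow> z2 poly \<Rightarrow> z2 poly" where
  "e2 x y z w = x*y + z*w + (x+y)*(z+w)"

lemma card_bij_param:
  assumes "\<forall>t\<in>A. \<psi> t \<in> B" "\<forall>s\<in>B. \<phi> s \<in> A" "\<forall>t\<in>A. \<phi> (\<psi> t) = t" "\<forall>s\<in>B. \<psi> (\<phi> s) = s"
  shows "card A = card B"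
proof -
  have "bij_betw \<psi> A B" by (rule bij_betw_byWitness[where f'=\<phi>]) (use assms in auto)
  then show ?thesis by (rule bij_betw_same_card)
qed

lemma e2_psi_a: "e2 (u+z) (v+z) z (\<alpha>+u+v+z) = u^2+u*v+v^2 + \<alpha>*(u+v) + \<alpha>*z"
  unfolding e2_def by (simp add: algebra_simps power2_eq_square)

lemma e2_psi_b: "e2 (u+z) (v+z) z (\<alpha>+u+v+z) + z^2 + (\<alpha>+u+v+z)^2 = (u*v + \<alpha>*(u+v) + \<alpha>^2) + \<alpha>*z"
  unfolding e2_def by (simp add: algebra_simps power2_eq_square)

lemma e2_psi_c: "e2 (u+z+\<alpha>) (v+z+\<alpha>) z (u+v+z+\<alpha>) + (u+v+z+\<alpha>)^2 = u*v + (z^2 + \<alpha>*z)"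
  unfolding e2_def by (simp add: algebra_simps power2_eq_square)

context ff
begin

lemma sum_if_const: "finite A \<Longrightarrow> (\<Sum>x\<in>A. if P x then (c::nat) else 0) = c * card {x\<in>A. P x}"
  by (simp add: sum.inter_filter[symmetric])

definition S4 :: "z2 poly \<Rightarrow> (z2 poly \<Rightarrow> z2 poly \<Rightarrow> z2 poly \<Rightarrow> z2 poly \<Rightarrow> bool) \<Rightarrow> _" where
  "S4 \<alpha> P = {(x,y,z,w). x \<in> CF \<and> y \<in> CF \<and> z \<in> CF \<and> w \<in> CF \<and> x+y+z+w = \<alpha> \<and> P x y z w}"

lemma S4_ab:
  assumes "\<alpha> \<in> CF" "\<And>u v z. P (u+z) (v+z) z (\<alpha>+u+v+z) = Q u v z"
  shows "card (S4 \<alpha> P) = (\<Sum>p\<in>CF\<times>CF. card {z\<in>CF. Q (fst p) (snd p) z})"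
proof -
  define A where "A = Sigma (CF\<times>CF) (\<lambda>p. {z\<in>CF. Q (fst p) (snd p) z})"
  define \<psi> :: "(z2 poly \<times> z2 poly) \<times> z2 poly \<Rightarrow> z2 poly \<times> z2 poly \<times> z2 poly \<times> z2 poly"
    where "\<psi> = (\<lambda>((u,v),z). (u+z, v+z, z, \<alpha>+u+v+z))"
  define \<phi> :: "z2 poly \<times> z2 poly \<times> z2 poly \<times> z2 poly \<Rightarrow> (z2 poly \<times> z2 poly) \<times> z2 poly"
    where "\<phi> = (\<lambda>(x,y,z,w). ((x+z, y+z), z))"
  have "card A = card (S4 \<alpha> P)"
  proof (rule card_bij_param[where \<psi>=\<psi> and \<phi>=\<phi>])
    show "\<forall>t\<in>A. \<psi> t \<in> S4 \<alpha> P"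
    proof
      fix t assume "t \<in> A"
      then obtain u v z where t: "t = ((u,v),z)" "u \<in> CF" "v \<in> CF" "z \<in> CF" "Q u v z" unfolding A_def by auto
      have "(u+z) + (v+z) + z + (\<alpha>+u+v+z) = \<alpha>" by (simp add: algebra_simps)
      then show "\<psi> t \<in> S4 \<alpha> P" unfolding S4_def \<psi>_def t(1) using t assms by simp
    qed
    show "\<forall>s\<in>S4 \<alpha> P. \<psi> (\<phi> s) = s"
    proof
      fix s assume "s \<in> S4 \<alpha> P"
      then obtain x y z w where s: "s = (x,y,z,w)" "x+y+z+w = \<alpha>" unfolding S4_def by auto
      have "\<alpha> + (x+z) + (y+z) + z = w" unfolding s(2)[symmetric] by (simp add: algebra_simps)
      then show "\<psi> (\<phi> s) = s" unfolding \<psi>_def \<phi>_def s(1) by (simp add: algebra_simps)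
    qed
    then show "\<forall>s\<in>S4 \<alpha> P. \<phi> s \<in> A"
    proof -
      assume inv: "\<forall>s\<in>S4 \<alpha> P. \<psi> (\<phi> s) = s"
      show ?thesis
      proof
        fix s assume sS: "s \<in> S4 \<alpha> P"
        then obtain x y z w where s: "s = (x,y,z,w)" "x \<in> CF" "y \<in> CF" "z \<in> CF" "w \<in> CF" "P x y z w"
          unfolding S4_def by auto
        have "\<psi> (\<phi> s) = s" using inv sS by blast
        then have "P (x+z+z) (y+z+z) z (\<alpha>+(x+z)+(y+z)+z)" using s(6) unfolding s(1) \<psi>_def \<phi>_def by simp
        then have "Q (x+z) (y+z) z" using assms(2)[of "x+z" z "y+z"] by simp
        then show "\<phi> s \<in> A" unfolding A_def \<phi>_def s(1) using s by simp
      qed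
    qed
    show "\<forall>t\<in>A. \<phi> (\<psi> t) = t" unfolding A_def \<phi>_def \<psi>_def by auto
  qed
  also have "card A = (\<Sum>p\<in>CF\<times>CF. card {z\<in>CF. Q (fst p) (snd p) z})"
    unfolding A_def by (rule card_SigmaI) auto
  finally show ?thesis by simp
qed

end

context ff
begin

lemma S4_c:
  assumes "\<alpha> \<in> CF" "\<And>u v z. P (u+z+\<alpha>) (v+z+\<alpha>) z (u+v+z+\<alpha>) = Q u v z"
  shows "card (S4 \<alpha> P) = (\<Sum>z\<in>CF. card {(u,v). u \<in> CF \<and> v \<in> CF \<and> Q u v z})"
proof -
  define A where "A = Sigma CF (\<lambda>z. {(u,v). u \<in> CF \<and> v \<in> CF \<and> Q u v z})"
  define \<psi> :: "z2 poly \<times> z2 poly \<times> z2 poly \<Rightarrow> z2 poly \<times> z2 poly \<times> z2 poly \<times> z2 poly"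
    where "\<psi> = (\<lambda>(z,u,v). (u+z+\<alpha>, v+z+\<alpha>, z, u+v+z+\<alpha>))"
  define \<phi> :: "z2 poly \<times> z2 poly \<times> z2 poly \<times> z2 poly \<Rightarrow> z2 poly \<times> z2 poly \<times> z2 poly"
    where "\<phi> = (\<lambda>(x,y,z,w). (z, x+z+\<alpha>, y+z+\<alpha>))"
  have "card A = card (S4 \<alpha> P)"
  proof (rule card_bij_param[where \<psi>=\<psi> and \<phi>=\<phi>])
    show "\<forall>t\<in>A. \<psi> t \<in> S4 \<alpha> P"
    proof
      fix t assume "t \<in> A"
      then obtain u v z where t: "t = (z,u,v)" "u \<in> CF" "v \<in> CF" "z \<in> CF" "Q u v z" unfolding A_def by auto
      have "(u+z+\<alpha>) + (v+z+\<alpha>) + z + (u+v+z+\<alpha>) = \<alpha>" by (simp add: algebra_simps)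
      then show "\<psi> t \<in> S4 \<alpha> P" unfolding S4_def \<psi>_def t(1) using t assms by simp
    qed
    show "\<forall>s\<in>S4 \<alpha> P. \<psi> (\<phi> s) = s"
    proof
      fix s assume "s \<in> S4 \<alpha> P"
      then obtain x y z w where s: "s = (x,y,z,w)" "x+y+z+w = \<alpha>" unfolding S4_def by auto
      have "(x+z+\<alpha>) + (y+z+\<alpha>) + z + \<alpha> = w" unfolding s(2)[symmetric] by (simp add: algebra_simps)
      then show "\<psi> (\<phi> s) = s" unfolding \<psi>_def \<phi>_def s(1) by (simp add: algebra_simps)
    qed
    then show "\<forall>s\<in>S4 \<alpha> P. \<phi> s \<in> A"
    proof -
      assume inv: "\<forall>s\<in>S4 \<alpha> P. \<psi> (\<phi> s) = s"
      show ?thesis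
      proof
        fix s assume sS: "s \<in> S4 \<alpha> P"
        then obtain x y z w where s: "s = (x,y,z,w)" "x \<in> CF" "y \<in> CF" "z \<in> CF" "w \<in> CF" "P x y z w"
          and sm: "x+y+z+w = \<alpha>"
          unfolding S4_def by auto
        have args: "(x+z+\<alpha>)+z+\<alpha> = x" "(y+z+\<alpha>)+z+\<alpha> = y" "(x+z+\<alpha>)+(y+z+\<alpha>)+z+\<alpha> = w"
          unfolding sm[symmetric] by (simp_all add: algebra_simps)
        have "P ((x+z+\<alpha>)+z+\<alpha>) ((y+z+\<alpha>)+z+\<alpha>) z ((x+z+\<alpha>)+(y+z+\<alpha>)+z+\<alpha>)"
          using s(6) by (simp only: args)
        then have "Q (x+z+\<alpha>) (y+z+\<alpha>) z" by (simp only: assms(2))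
        then show "\<phi> s \<in> A" unfolding A_def \<phi>_def s(1) using s assms(1) by simp
      qed
    qed
    show "\<forall>t\<in>A. \<phi> (\<psi> t) = t" unfolding A_def \<phi>_def \<psi>_def by (auto simp: algebra_simps)
  qed
  also have "card A = (\<Sum>z\<in>CF. card {(u,v). u \<in> CF \<and> v \<in> CF \<and> Q u v z})"
    unfolding A_def
  proof (rule card_SigmaI)
    show "\<forall>a\<in>CF. finite {(u, v). u \<in> CF \<and> v \<in> CF \<and> Q u v a}"
      by (auto intro: finite_subset[of _ "CF \<times> CF"])
  qed simp
  finally show ?thesis by simp
qed

lemma card_CF2: "card (CF \<times> CF) = q^2"
  by (simp add: card_cartesian_product card_CF power2_eq_square)

lemma fiber_const: "card {z \<in> CF. R} = (if R then q else 0)"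
  by (simp add: card_CF)

lemma count_a:
  assumes "\<alpha> \<in> CF"
  shows "card (S4 \<alpha> (\<lambda>x y z w. g dvd e2 x y z w + D)) = (if \<alpha> = 0 then (if g dvd D then q else q*(q+1)) else q^2)"
proof -
  have c: "card (S4 \<alpha> (\<lambda>x y z w. g dvd e2 x y z w + D)) =
      (\<Sum>p\<in>CF\<times>CF. card {z\<in>CF. g dvd (fst p^2 + fst p * snd p + snd p^2 + \<alpha>*(fst p + snd p)) + \<alpha>*z + D})"
    by (rule S4_ab[OF assms]) (simp add: e2_psi_a)
  show ?thesis
  proof (cases "\<alpha> = 0")
    case False
    have "(\<Sum>p\<in>CF\<times>CF. card {z\<in>CF. g dvd (fst p^2 + fst p * snd p + snd p^2 + \<alpha>*(fst p + snd p)) + \<alpha>*z + D})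
       = (\<Sum>p\<in>CF\<times>CF. 1)" by (rule sum.cong) (simp_all add: lin_card[OF assms False])
    then show ?thesis using c False card_CF2 by simp
  next
    case True
    have "(\<Sum>p\<in>CF\<times>CF. card {z\<in>CF. g dvd (fst p^2 + fst p * snd p + snd p^2 + \<alpha>*(fst p + snd p)) + \<alpha>*z + D})
       = (\<Sum>p\<in>CF\<times>CF. if g dvd fst p^2 + fst p * snd p + snd p^2 + D then q else 0)"
      using True by (intro sum.cong) (simp_all add: fiber_const)
    also have "\<dots> = q * card {p\<in>CF\<times>CF. g dvd fst p^2 + fst p * snd p + snd p^2 + D}"
      by (rule sum_if_const) simp
    also have "{p\<in>CF\<times>CF. g dvd fst p^2 + fst p * snd p + snd p^2 + D} = {(u,v). u \<in> CF \<and> v \<in> CF \<and> g dvd u^2 + u*v + v^2 + D}"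
      by auto
    finally show ?thesis using c True quad_card[of D] by simp
  qed
qed

lemma count_b:
  assumes "\<alpha> \<in> CF"
  shows "card (S4 \<alpha> (\<lambda>x y z w. g dvd e2 x y z w + z^2 + w^2 + D)) = (if \<alpha> = 0 then (if g dvd D then (2*q - 1)*q else (q - 1)*q) else q^2)"
proof -
  have c: "card (S4 \<alpha> (\<lambda>x y z w. g dvd e2 x y z w + z^2 + w^2 + D)) =
      (\<Sum>p\<in>CF\<times>CF. card {z\<in>CF. g dvd (fst p * snd p + \<alpha>*(fst p + snd p) + \<alpha>^2) + \<alpha>*z + D})"
    by (rule S4_ab[OF assms]) (simp add: e2_psi_b)
  show ?thesis
  proof (cases "\<alpha> = 0")
    case False
    have "(\<Sum>p\<in>CF\<times>CF. card {z\<in>CF. g dvd (fst p * snd p + \<alpha>*(fst p + snd p) + \<alpha>^2) + \<alpha>*z + D})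
       = (\<Sum>p\<in>CF\<times>CF. 1)" by (rule sum.cong) (simp_all add: lin_card[OF assms False])
    then show ?thesis using c False card_CF2 by simp
  next
    case True
    have "(\<Sum>p\<in>CF\<times>CF. card {z\<in>CF. g dvd (fst p * snd p + \<alpha>*(fst p + snd p) + \<alpha>^2) + \<alpha>*z + D})
       = (\<Sum>p\<in>CF\<times>CF. if g dvd fst p * snd p + D then q else 0)"
      using True by (intro sum.cong) (simp_all add: fiber_const)
    also have "\<dots> = q * card {p\<in>CF\<times>CF. g dvd fst p * snd p + D}"
      by (rule sum_if_const) simp
    also have "{p\<in>CF\<times>CF. g dvd fst p * snd p + D} = {(u,v). u \<in> CF \<and> v \<in> CF \<and> g dvd u * v + D}"
      by auto
    finally show ?thesis using c True prod_card[of D] by (simp add: mult.commute)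
  qed
qed

lemma count_c:
  assumes "\<alpha> \<in> CF"
  shows "card (S4 \<alpha> (\<lambda>x y z w. g dvd e2 x y z w + w^2 + D)) =
    (if \<alpha> = 0 then q^2 else if (\<exists>z\<in>CF. g dvd z^2 + \<alpha>*z + D) then (q+1)*q else (q - 1)*q)"
proof -
  have c: "card (S4 \<alpha> (\<lambda>x y z w. g dvd e2 x y z w + w^2 + D)) =
      (\<Sum>z\<in>CF. card {(u,v). u \<in> CF \<and> v \<in> CF \<and> g dvd (u * v + (z^2 + \<alpha>*z)) + D})"
    by (rule S4_c[OF assms]) (simp only: e2_psi_c)
  also have "\<dots> = (\<Sum>z\<in>CF. (q - 1) + (if g dvd z^2 + \<alpha>*z + D then q else 0))"
    by (rule sum.cong) (use q_ge2 in \<open>simp_all add: prod_card add.assoc mult_2\<close>)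
  also have "\<dots> = (\<Sum>z\<in>CF. (q - 1)) + (\<Sum>z\<in>CF. if g dvd z^2 + \<alpha>*z + D then q else 0)"
    by (rule sum.distrib)
  also have "\<dots> = q * (q - 1) + q * card {z\<in>CF. g dvd z^2 + \<alpha>*z + D}"
    by (simp only: sum_constant card_CF sum_if_const[OF finite_CF] of_nat_id)
  finally have e: "card (S4 \<alpha> (\<lambda>x y z w. g dvd e2 x y z w + w^2 + D)) = q * (q - 1) + q * card {z\<in>CF. g dvd z^2 + \<alpha>*z + D}" .
  show ?thesis
  proof (cases "\<alpha> = 0")
    case True
    then have "card {z\<in>CF. g dvd z^2 + \<alpha>*z + D} = 1" using sqrt_card[of D] by simp
    then have "card (S4 \<alpha> (\<lambda>x y z w. g dvd e2 x y z w + w^2 + D)) = q * (q - 1) + q" using e by simp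
    also have "\<dots> = q^2" using q_ge2 by (simp add: power2_eq_square algebra_simps)
    finally show ?thesis using True by simp
  next
    case False
    have k: "q * (q - 1) + q * 2 = (q + 1) * q" "q * (q - 1) + q * 0 = (q - 1) * q"
      using q_ge2 by (simp_all add: algebra_simps)
    show ?thesis using e artin_card[OF assms False, of D] False k by simp
  qed
qed

end

lemma mu_smult2: "mu (smult 2 p) = 0"
  by (rule poly_eqI) (simp add: coeff_map_poly red2_hom.hom_mult)

lemma mu_2mult: "mu (2 * p) = 0"
  by (simp add: numeral_mult_conv_smult mu_smult2)

lemma deg_mu_le: "degree (mu p) \<le> degree p"
  by (rule degree_map_poly_le)

lemma sq_eq_of_mu: assumes "mu a = mu b" shows "a^2 = b^2"
proof -
  have "mu (a - b) = 0" using assms by (simp add: red2_phom.hom_minus)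
  then have "a - b = smult 2 (map_poly hl (a - b))" by (rule poly_even)
  then have e: "a = b + 2 * map_poly hl (a - b)" by (simp add: numeral_mult_conv_smult algebra_simps)
  obtain t where "a = b + 2 * t" using e by blast
  then show ?thesis using sq_kill[OF z4poly_four, of b t] by simp
qed

lemma pow_eq_of_mu: assumes "mu a = mu b" "m > 0" shows "a^(2^m) = b^(2^m)"
proof -
  have "a^(2^m) = (a^2)^(2^(m-1))" "b^(2^m) = (b^2)^(2^(m-1))"
    using assms(2) by (simp_all add: power_mult[symmetric] power_Suc[symmetric] flip: power_Suc)
  then show ?thesis using sq_eq_of_mu[OF assms(1)] by simp
qed

locale gsetup =
  fixes f \<beta> :: "z4 poly" and m :: nat
  assumes monic: "lead_coeff f = 1" and deg: "degree f = m"
    and irrf: "irreducible (mu f)" and oddm0: "odd m"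
    and ord: "gr_has_order f \<beta> (2 ^ m - 1)"
begin

lemma m_pos0: "m > 0" using oddm0 by (cases m) auto

sublocale grf f using monic deg m_pos0 by unfold_locales simp_all

abbreviation N where "N \<equiv> (2::nat)^m - 1"
abbreviation T where "T \<equiv> teich f \<beta>"

lemma N_Suc: "Suc N = 2^m" by simp

lemma beta_C: "\<beta> \<in> C" and bN1: "gr_red f (\<beta>^N) = 1"
  and bnot1: "\<And>k. 0 < k \<Longrightarrow> k < N \<Longrightarrow> gr_red f (\<beta>^k) \<noteq> 1"
  using ord unfolding gr_has_order_def gr_pow_def by auto

lemma bN: "f dvd \<beta>^N - 1"
proof -
  have "gr_red f (\<beta>^N) = gr_red f 1" using bN1 gr_red_id[OF C_1] by simp
  then show ?thesis unfolding gr_red_eq_iff .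
qed

lemma T_eq: "T = insert 0 ((\<lambda>k. gr_red f (\<beta>^k)) ` {..<N})"
  unfolding teich_def gr_pow_def deg ..

lemma T_C: "X \<in> T \<Longrightarrow> X \<in> C"
  unfolding T_eq using gr_red(1) by auto

lemma T_pow: assumes "X \<in> T" shows "f dvd X^(2^m) - X"
proof (cases "X = 0")
  case True then show ?thesis by (simp add: zero_power)
next
  case False
  then obtain k where X: "X = gr_red f (\<beta>^k)" using assms unfolding T_eq by auto
  have d1: "f dvd \<beta>^k - X" unfolding X by (rule gr_red(2))
  have d2: "f dvd (\<beta>^k)^(2^m) - X^(2^m)" by (rule dvd_pow_diff[OF d1])
  have "f dvd (\<beta>^N)^k - 1^k" by (rule dvd_pow_diff[OF bN])
  then have d3: "f dvd \<beta>^k * ((\<beta>^N)^k - 1)" by simp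
  have "(\<beta>^k)^(2^m) = \<beta>^k * (\<beta>^N)^k"
  proof -
    have "(\<beta>^k)^(2^m) = \<beta>^(k * Suc N)" by (simp add: power_mult[symmetric] N_Suc)
    also have "\<dots> = \<beta>^k * (\<beta>^N)^k" by (simp add: power_mult[symmetric] power_add[symmetric] algebra_simps)
    finally show ?thesis .
  qed
  then have e: "X^(2^m) - X = ((\<beta>^k)^(2^m) - X^(2^m)) * (-1) + \<beta>^k * ((\<beta>^N)^k - 1) + (\<beta>^k - X)"
    by (simp add: algebra_simps)
  show ?thesis unfolding e by (rule dvd_add[OF dvd_add[OF dvd_mult2[OF d2] d3] d1])
qed

lemma f_not_dvd_1: "\<not> f dvd 1"
proof
  assume "f dvd 1"
  then have "gr_red f 1 = gr_red f 0" using gr_red_eq_iff by simp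
  then show False using gr_red_id[OF C_1] gr_red_id[OF C_0] by simp
qed

lemma inj_pow: "inj_on (\<lambda>k. gr_red f (\<beta>^k)) {..<N}"
proof -
  have key: "False" if "i < j" "j < N" "gr_red f (\<beta>^i) = gr_red f (\<beta>^j)" for i j
  proof -
    define d where "d = j - i"
    have d: "0 < d" "d < N" "j = i + d" using that unfolding d_def by auto
    have "f dvd \<beta>^i - \<beta>^j" using that(3) unfolding gr_red_eq_iff .
    then have "f dvd - (\<beta>^i - \<beta>^j)" by (simp only: dvd_minus_iff)
    then have "f dvd \<beta>^j - \<beta>^i" by simp
    then have "f dvd \<beta>^(N-i) * (\<beta>^j - \<beta>^i)" by simp
    moreover have "\<beta>^(N-i) * (\<beta>^j - \<beta>^i) = \<beta>^N * (\<beta>^d - 1)"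
    proof -
      have "N - i + i = N" using that by simp
      then have "\<beta>^(N-i) * \<beta>^i = \<beta>^N" by (metis power_add)
      then show ?thesis unfolding d(3) by (simp add: power_add algebra_simps)
    qed
    ultimately have a: "f dvd \<beta>^N * (\<beta>^d - 1)" by simp
    have "\<beta>^d - 1 = \<beta>^N * (\<beta>^d - 1) - (\<beta>^N - 1) * (\<beta>^d - 1)" by (simp add: algebra_simps)
    moreover have "f dvd \<beta>^N * (\<beta>^d - 1) - (\<beta>^N - 1) * (\<beta>^d - 1)"
      using dvd_diff[OF a dvd_mult2[OF bN]] .
    ultimately have "f dvd \<beta>^d - 1" by simp
    then have "gr_red f (\<beta>^d) = gr_red f 1" using gr_red_eq_iff by simp
    then have "gr_red f (\<beta>^d) = 1" using gr_red_id[OF C_1] by simp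
    then show False using bnot1[OF d(1,2)] by simp
  qed
  show ?thesis
  proof (rule inj_onI)
    fix i j assume "i \<in> {..<N}" "j \<in> {..<N}" "gr_red f (\<beta>^i) = gr_red f (\<beta>^j)"
    then show "i = j" using key[of i j] key[of j i] by (cases i j rule: linorder_cases) auto
  qed
qed

lemma zero_notin: "0 \<notin> (\<lambda>k. gr_red f (\<beta>^k)) ` {..<N}"
proof
  assume "0 \<in> (\<lambda>k. gr_red f (\<beta>^k)) ` {..<N}"
  then obtain k where k: "k < N" "gr_red f (\<beta>^k) = 0" by auto
  then have "gr_red f (\<beta>^k) = gr_red f 0" using gr_red_id[OF C_0] by simp
  then have "f dvd \<beta>^k" using gr_red_eq_iff by simp
  then have "f dvd \<beta>^k * \<beta>^(N-k)" by simp
  moreover have "\<beta>^k * \<beta>^(N-k) = \<beta>^N" using k(1) by (simp flip: power_add)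
  ultimately have "f dvd \<beta>^N" by simp
  then have "f dvd \<beta>^N - (\<beta>^N - 1)" using bN by (rule dvd_diff)
  then have "f dvd 1" by simp
  then show False using f_not_dvd_1 by simp
qed

lemma finite_T: "finite T" unfolding T_eq by simp

lemma card_T: "card T = 2^m"
proof -
  have "card T = Suc (card ((\<lambda>k. gr_red f (\<beta>^k)) ` {..<N}))"
    unfolding T_eq using zero_notin by (simp add: card_insert_if)
  also have "\<dots> = Suc N" using card_image[OF inj_pow] by simp
  finally show ?thesis by simp
qed

end

context gsetup
begin

lemma deg_g: "degree (mu f) = m"
proof -
  have "red2 (lead_coeff f) = 0 \<longleftrightarrow> f = 0" using monic by auto
  then show ?thesis using Ring_Hom_Poly.degree_map_poly[of red2 f] deg by simp
qed

lemma mu_C: "p \<in> C \<Longrightarrow> degree (mu p) < m"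
  using deg_mu_le[of p] C_iff deg by (meson le_less_trans)

lemma mu_dvd: "f dvd a - b \<Longrightarrow> mu f dvd mu a - mu b"
  using red2_phom.hom_dvd[of f "a - b"] by (simp add: red2_phom.hom_minus)

lemma mu_inj_T: assumes "X \<in> T" "Y \<in> T" "mu X = mu Y" shows "X = Y"
proof -
  have e: "X^(2^m) = Y^(2^m)" by (rule pow_eq_of_mu[OF assms(3) m_pos0])
  have "X - Y = (Y^(2^m) - Y) - (X^(2^m) - X)" using e by simp
  moreover have "f dvd (Y^(2^m) - Y) - (X^(2^m) - X)" using T_pow[OF assms(1)] T_pow[OF assms(2)] by (rule dvd_diff[rotated])
  ultimately have "f dvd X - Y" by simp
  then have "gr_red f X = gr_red f Y" unfolding gr_red_eq_iff .
  then show ?thesis using gr_red_id T_C assms(1,2) by metis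
qed

definition CFm :: "z2 poly set" where "CFm = {p. degree p < m}"

lemma card_CFm: "finite CFm" "card CFm = 2^m"
  using Bn_card[of m, where 'a=z2] Bn_deg[OF m_pos0, where 'a=z2] unfolding CFm_def by auto

lemma bij_T: "bij_betw mu T CFm"
proof -
  have inj: "inj_on mu T" using mu_inj_T by (meson inj_onI)
  have sub: "mu ` T \<subseteq> CFm" unfolding CFm_def using mu_C T_C by auto
  have "card (mu ` T) = card CFm" using card_image[OF inj] card_T card_CFm by simp
  then have "mu ` T = CFm" using card_subset_eq[OF card_CFm(1) sub] by simp
  then show ?thesis using inj by (simp add: bij_betw_def)
qed

lemma fermat0: assumes "degree x < m" shows "x^(2^m) mod mu f = x"
proof -
  have "x \<in> CFm" using assms unfolding CFm_def by simp
  then obtain X where X: "X \<in> T" "x = mu X" using bij_T by (metis bij_betw_imp_surj_on imageE)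
  have "mu f dvd mu (X^(2^m)) - mu X" by (rule mu_dvd[OF T_pow[OF X(1)]])
  then have "mu f dvd x^(2^m) - x" unfolding X(2) by (simp add: red2_phom.hom_power)
  then have "x^(2^m) mod mu f = x mod mu f" by (simp add: mod_eq_dvd_iff)
  also have "\<dots> = x" using assms deg_g by (simp add: mod_poly_less)
  finally show ?thesis .
qed

end

sublocale gsetup \<subseteq> F: ff "mu f" m
  by unfold_locales (simp_all add: deg_g irrf oddm0 fermat0)

context gsetup
begin

lemma CF_CFm: "F.CF = CFm" unfolding F.CF_def CFm_def ..

lemma bij_T': "bij_betw mu T F.CF" using bij_T CF_CFm by simp

lemma mu_C': "p \<in> C \<Longrightarrow> mu p \<in> F.CF" using mu_C unfolding F.CF_def by simp

lemma mu_T: "X \<in> T \<Longrightarrow> mu X \<in> F.CF" using mu_C' T_C by simp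

lemma mu_gr_red: "mu (gr_red f P) = mu P mod mu f"
proof -
  have "mu f dvd mu P - mu (gr_red f P)" by (rule mu_dvd[OF gr_red(2)])
  then have "mu P mod mu f = mu (gr_red f P) mod mu f" by (simp add: mod_eq_dvd_iff)
  also have "\<dots> = mu (gr_red f P)" using F.CF_mod[OF mu_C'[OF gr_red(1)]] .
  finally show ?thesis by simp
qed

definition nu :: "z4 poly \<Rightarrow> z2 poly" where "nu p = map_poly hf (p - gr_red f (p^(2^m)))"

lemma nu_CF: "p \<in> C \<Longrightarrow> nu p \<in> F.CF"
proof -
  assume p: "p \<in> C"
  have "p - gr_red f (p^(2^m)) \<in> C" using C_diff[OF p gr_red(1)] .
  then have "degree (p - gr_red f (p^(2^m))) < m" using C_iff deg by simp
  then show ?thesis unfolding nu_def F.CF_def using degree_map_poly_le by (metis le_less_trans mem_Collect_eq)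
qed

lemma mu_red_pow: "p \<in> C \<Longrightarrow> mu (gr_red f (p^(2^m))) = mu p"
  using mu_gr_red F.fermat_CF[OF mu_C'] by (simp add: red2_phom.hom_power)

lemma mu_D0: "p \<in> C \<Longrightarrow> mu (p - gr_red f (p^(2^m))) = 0"
  using mu_red_pow by (simp add: red2_phom.hom_minus)

lemma inj_munu: assumes "r \<in> C" "s \<in> C" "mu r = mu s" "nu r = nu s" shows "r = s"
proof -
  have "r^(2^m) = s^(2^m)" by (rule pow_eq_of_mu[OF assms(3) m_pos0])
  then have e: "gr_red f (r^(2^m)) = gr_red f (s^(2^m))" by simp
  have "r - gr_red f (r^(2^m)) = s - gr_red f (s^(2^m))"
    using hf_inj[OF mu_D0[OF assms(1)] mu_D0[OF assms(2)]] assms(4) unfolding nu_def by blast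
  then show ?thesis using e by simp
qed

lemma nu_eval: assumes "s \<in> C" "f dvd s - s^(2^m) - 2 * E" shows "nu s = mu E mod mu f"
proof -
  have D: "s - gr_red f (s^(2^m)) \<in> C" using C_diff[OF assms(1) gr_red(1)] .
  have E2: "smult 2 (gr_red f E) \<in> C" by (rule C_smult[OF gr_red(1)])
  have sm: "smult 2 (gr_red f E) = 2 * gr_red f E" by (simp add: numeral_mult_conv_smult)
  have "(s - gr_red f (s^(2^m))) - smult 2 (gr_red f E) =
        (s - s^(2^m) - 2 * E) + (s^(2^m) - gr_red f (s^(2^m))) + 2 * (E - gr_red f E)"
    unfolding sm by (simp add: algebra_simps)
  moreover have "f dvd (s - s^(2^m) - 2 * E) + (s^(2^m) - gr_red f (s^(2^m))) + 2 * (E - gr_red f E)"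
    using assms(2) gr_red(2) by (intro dvd_add dvd_mult) auto
  ultimately have "f dvd (s - gr_red f (s^(2^m))) - smult 2 (gr_red f E)" by (simp only:)
  then have "gr_red f (s - gr_red f (s^(2^m))) = gr_red f (smult 2 (gr_red f E))" unfolding gr_red_eq_iff .
  then have "s - gr_red f (s^(2^m)) = smult 2 (gr_red f E)" using gr_red_id[OF D] gr_red_id[OF E2] by simp
  then have "nu s = mu (gr_red f E)" unfolding nu_def by (simp add: hf_smult2)
  then show ?thesis using mu_gr_red by simp
qed

lemma nu_0: "nu 0 = 0"
  unfolding nu_def using gr_red_id[OF C_0] m_pos0 by (simp add: zero_power)

end

lemma sum4_pow: assumes "(4::'a::comm_ring_1) = 0"
  shows "((a1::'a)+a2+a3+a4)^(2^Suc k) = a1^(2^Suc k) + a2^(2^Suc k) + a3^(2^Suc k) + a4^(2^Suc k)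
     + 2*((a1*a2)^(2^k) + (a3*a4)^(2^k) + ((a1+a2)*(a3+a4))^(2^k))"
proof -
  have e: "a1+a2+a3+a4 = (a1+a2)+(a3+a4)" by (simp add: add.assoc)
  show ?thesis unfolding e pow2_sum[OF assms, of "a1+a2" "a3+a4" k] pow2_sum[OF assms, of a1 a2 k]
    pow2_sum[OF assms, of a3 a4 k] by (simp add: algebra_simps)
qed

lemma id_a: "(x::'a::comm_ring_1)+y+z+w - (xq+yq+zq+wq + 2*P) - 2*P = -((xq - x) + (yq - y) + (zq - z) + (wq - w)) - 4*P"
  by (simp add: algebra_simps)
lemma id_b: "(x::'a::comm_ring_1)+y+-z+-w - (xq+yq+zq+wq + 2*P) - 2*(P+z+w) = -((xq - x) + (yq - y) + (zq - z) + (wq - w)) - 4*(P+z+w)"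
  by (simp add: algebra_simps)
lemma id_c: "(x::'a::comm_ring_1)+y+z+-w - (xq+yq+zq+wq + 2*P) - 2*(P+w) = -((xq - x) + (yq - y) + (zq - z) + (wq - w)) - 4*(P+w)"
  by (simp add: algebra_simps)

context ff
begin

lemma frob_cond:
  assumes "\<nu> \<in> CF"
  shows "(u^(2^(m-1)) + c) mod g = \<nu> \<longleftrightarrow> g dvd u + c^2 + \<nu>^2"
proof -
  have n2: "2^(m-1)*2 = (2::nat)^m" using m_pos by (cases m) auto
  have "(u^(2^(m-1)))^2 = u^(2^(m-1)*2)" by (simp only: power_mult)
  also have "\<dots> = u^q" by (simp only: n2)
  finally have qh: "(u^(2^(m-1)))^2 = u^q" .
  have "(u^(2^(m-1)) + c) mod g = \<nu> \<longleftrightarrow> g dvd \<nu> - (u^(2^(m-1)) + c)"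
    by (subst eq_commute) (rule CF_eq_mod[OF assms])
  also have "\<dots> \<longleftrightarrow> g dvd u^(2^(m-1)) + c + \<nu>" by (simp add: z2p_minus algebra_simps)
  also have "\<dots> \<longleftrightarrow> g dvd (u^(2^(m-1)) + c + \<nu>)^2" using dvd_sq g_dvd_pow by blast
  also have "(u^(2^(m-1)) + c + \<nu>)^2 = u^q + c^2 + \<nu>^2" by (simp only: z2p_sq_add qh)
  also have "g dvd u^q + c^2 + \<nu>^2 \<longleftrightarrow> g dvd u + c^2 + \<nu>^2"
  proof -
    have f: "g dvd u^q + u" using fermat[of u] mod_eq_iff by simp
    have e: "u^q + c^2 + \<nu>^2 = (u^q + u) + (u + c^2 + \<nu>^2)" by simp
    show ?thesis unfolding e by (rule dvd_add_right_iff[OF f])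
  qed
  finally show ?thesis .
qed

lemma frob_e2: "(x*y)^(2^k) + (z*w)^(2^k) + ((x+y)*(z+w))^(2^k) = (e2 x y z w)^(2^k)"
  unfolding e2_def by (simp add: frob_add)

end

context gsetup
begin

abbreviation h where "h \<equiv> (2::nat)^(m-1)"

lemma mSuc: "m = Suc (m - 1)" using m_pos0 by simp

lemma pow_split: "(a1+a2+a3+a4)^(2^m) = a1^(2^m) + a2^(2^m) + a3^(2^m) + a4^(2^m)
     + 2*((a1*a2)^h + (a3*a4)^h + ((a1+a2)*(a3+a4))^h)" for a1 a2 a3 a4 :: "z4 poly"
  using sum4_pow[OF z4poly_four, of a1 a2 a3 a4 "m-1"] unfolding mSuc[symmetric] .

lemma mu_e2: "mu ((X*Y)^h + (Z*W)^h + ((X+Y)*(Z+W))^h) = (e2 (mu X) (mu Y) (mu Z) (mu W))^h"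
  using F.frob_e2 by (simp add: red2_phom.hom_add red2_phom.hom_mult red2_phom.hom_power)

lemma mu_neg: "mu (- X) = mu X"
  by (simp add: red2_phom.hom_uminus)

lemma four_zero: "4 * (P::z4 poly) = 0" by simp

lemma eq_iff_munu: "s \<in> C \<Longrightarrow> a \<in> C \<Longrightarrow> s = a \<longleftrightarrow> mu s = mu a \<and> nu s = nu a"
  using inj_munu by blast

lemma nu0_iff: assumes a: "a \<in> C" shows "mu f dvd (nu a)^2 \<longleftrightarrow> nu a = 0"
proof
  assume "mu f dvd (nu a)^2"
  then have "mu f dvd nu a" by (rule F.g_dvd_pow)
  then show "nu a = 0" using F.CF_zero_iff[OF nu_CF[OF a]] by simp
qed simp

lemma cond_a:
  assumes T: "X \<in> T" "Y \<in> T" "Z \<in> T" "W \<in> T" and a: "a \<in> C"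
  shows "X+Y+Z+W = a \<longleftrightarrow> mu X + mu Y + mu Z + mu W = mu a \<and> mu f dvd e2 (mu X) (mu Y) (mu Z) (mu W) + (nu a)^2"
proof -
  let ?s = "X+Y+Z+W"
  let ?P = "(X*Y)^h + (Z*W)^h + ((X+Y)*(Z+W))^h"
  have sC: "?s \<in> C" using T by (intro C_add C_uminus T_C)
  have eq0: "?s - ?s^(2^m) - 2*?P = -((X^(2^m) - X) + (Y^(2^m) - Y) + (Z^(2^m) - Z) + (W^(2^m) - W)) - 4*?P"
    unfolding pow_split by (rule id_a)
  have eq: "?s - ?s^(2^m) - 2*?P = -((X^(2^m) - X) + (Y^(2^m) - Y) + (Z^(2^m) - Z) + (W^(2^m) - W))" using eq0 by simp
  have dd: "f dvd -((X^(2^m) - X) + (Y^(2^m) - Y) + (Z^(2^m) - Z) + (W^(2^m) - W))"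
    unfolding dvd_minus_iff using T_pow[OF T(1)] T_pow[OF T(2)] T_pow[OF T(3)] T_pow[OF T(4)]
    by (intro dvd_add)
  have "f dvd ?s - ?s^(2^m) - 2*?P" unfolding eq by (rule dd)
  then have "nu ?s = mu ?P mod mu f" by (rule nu_eval[OF sC])
  then have nu_s: "nu ?s = (e2 (mu X) (mu Y) (mu Z) (mu W))^h mod mu f"
    unfolding mu_e2 .
  have mu_s: "mu ?s = mu X + mu Y + mu Z + mu W" by (simp add: red2_phom.hom_add)
  have "nu ?s = nu a \<longleftrightarrow> ((e2 (mu X) (mu Y) (mu Z) (mu W))^h + 0) mod mu f = nu a" using nu_s by simp
  also have "\<dots> \<longleftrightarrow> mu f dvd e2 (mu X) (mu Y) (mu Z) (mu W) + 0^2 + (nu a)^2"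
    by (rule F.frob_cond[OF nu_CF[OF a]])
  finally show ?thesis using eq_iff_munu[OF sC a] mu_s by simp
qed

lemma cond_b:
  assumes T: "X \<in> T" "Y \<in> T" "Z \<in> T" "W \<in> T" and a: "a \<in> C"
  shows "X+Y-Z-W = a \<longleftrightarrow> mu X + mu Y + mu Z + mu W = mu a \<and>
     mu f dvd e2 (mu X) (mu Y) (mu Z) (mu W) + (mu Z)^2 + (mu W)^2 + (nu a)^2"
proof -
  let ?s = "X+Y+(-Z)+(-W)"
  let ?P = "(X*Y)^h + ((-Z)*(-W))^h + ((X+Y)*((-Z)+(-W)))^h"
  have ev: "even ((2::nat)^m)" using m_pos0 by simp
  have sC: "?s \<in> C" using T by (intro C_add C_uminus T_C)
  have eq0: "?s - ?s^(2^m) - 2*(?P + Z + W) = -((X^(2^m) - X) + (Y^(2^m) - Y) + (Z^(2^m) - Z) + (W^(2^m) - W)) - 4*(?P + Z + W)"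
    unfolding pow_split power_minus_even[OF ev] by (rule id_b)
  have eq: "?s - ?s^(2^m) - 2*(?P + Z + W) = -((X^(2^m) - X) + (Y^(2^m) - Y) + (Z^(2^m) - Z) + (W^(2^m) - W))" using eq0 by simp
  have dd: "f dvd -((X^(2^m) - X) + (Y^(2^m) - Y) + (Z^(2^m) - Z) + (W^(2^m) - W))"
    unfolding dvd_minus_iff using T_pow[OF T(1)] T_pow[OF T(2)] T_pow[OF T(3)] T_pow[OF T(4)]
    by (intro dvd_add)
  have "f dvd ?s - ?s^(2^m) - 2*(?P + Z + W)" unfolding eq by (rule dd)
  then have "nu ?s = mu (?P + Z + W) mod mu f" by (rule nu_eval[OF sC])
  also have "mu (?P + Z + W) = (e2 (mu X) (mu Y) (mu Z) (mu W))^h + (mu Z + mu W)"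
    using mu_e2[of X Y "-Z" "-W"] by (simp add: red2_phom.hom_add mu_neg add.assoc)
  finally have nu_s: "nu ?s = ((e2 (mu X) (mu Y) (mu Z) (mu W))^h + (mu Z + mu W)) mod mu f" .
  have mu_s: "mu ?s = mu X + mu Y + mu Z + mu W" by (simp only: red2_phom.hom_add mu_neg)
  have "nu ?s = nu a \<longleftrightarrow> mu f dvd e2 (mu X) (mu Y) (mu Z) (mu W) + (mu Z + mu W)^2 + (nu a)^2"
    unfolding nu_s by (rule F.frob_cond[OF nu_CF[OF a]])
  also have "(mu Z + mu W)^2 = (mu Z)^2 + (mu W)^2" by (rule z2p_sq_add)
  finally have nui: "nu ?s = nu a \<longleftrightarrow> mu f dvd e2 (mu X) (mu Y) (mu Z) (mu W) + (mu Z)^2 + (mu W)^2 + (nu a)^2"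
    by (simp add: add.assoc)
  have fin: "?s = a \<longleftrightarrow> mu X + mu Y + mu Z + mu W = mu a \<and>
     mu f dvd e2 (mu X) (mu Y) (mu Z) (mu W) + (mu Z)^2 + (mu W)^2 + (nu a)^2"
    unfolding eq_iff_munu[OF sC a] mu_s nui ..
  have e: "X+Y-Z-W = ?s" by simp
  show ?thesis unfolding e by (rule fin)
qed

lemma cond_c:
  assumes T: "X \<in> T" "Y \<in> T" "Z \<in> T" "W \<in> T" and a: "a \<in> C"
  shows "X+Y+Z-W = a \<longleftrightarrow> mu X + mu Y + mu Z + mu W = mu a \<and>
     mu f dvd e2 (mu X) (mu Y) (mu Z) (mu W) + (mu W)^2 + (nu a)^2"
proof -
  let ?s = "X+Y+Z+(-W)"
  let ?P = "(X*Y)^h + (Z*(-W))^h + ((X+Y)*(Z+(-W)))^h"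
  have ev: "even ((2::nat)^m)" using m_pos0 by simp
  have sC: "?s \<in> C" using T by (intro C_add C_uminus T_C)
  have eq0: "?s - ?s^(2^m) - 2*(?P + W) = -((X^(2^m) - X) + (Y^(2^m) - Y) + (Z^(2^m) - Z) + (W^(2^m) - W)) - 4*(?P + W)"
    unfolding pow_split power_minus_even[OF ev] by (rule id_c)
  have eq: "?s - ?s^(2^m) - 2*(?P + W) = -((X^(2^m) - X) + (Y^(2^m) - Y) + (Z^(2^m) - Z) + (W^(2^m) - W))" using eq0 by simp
  have dd: "f dvd -((X^(2^m) - X) + (Y^(2^m) - Y) + (Z^(2^m) - Z) + (W^(2^m) - W))"
    unfolding dvd_minus_iff using T_pow[OF T(1)] T_pow[OF T(2)] T_pow[OF T(3)] T_pow[OF T(4)]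
    by (intro dvd_add)
  have "f dvd ?s - ?s^(2^m) - 2*(?P + W)" unfolding eq by (rule dd)
  then have "nu ?s = mu (?P + W) mod mu f" by (rule nu_eval[OF sC])
  also have "mu (?P + W) = (e2 (mu X) (mu Y) (mu Z) (mu W))^h + mu W"
    using mu_e2[of X Y Z "-W"] by (simp add: red2_phom.hom_add mu_neg)
  finally have nu_s: "nu ?s = ((e2 (mu X) (mu Y) (mu Z) (mu W))^h + mu W) mod mu f" .
  have mu_s: "mu ?s = mu X + mu Y + mu Z + mu W" by (simp only: red2_phom.hom_add mu_neg)
  have nui: "nu ?s = nu a \<longleftrightarrow> mu f dvd e2 (mu X) (mu Y) (mu Z) (mu W) + (mu W)^2 + (nu a)^2"
    unfolding nu_s by (rule F.frob_cond[OF nu_CF[OF a]])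
  have fin: "?s = a \<longleftrightarrow> mu X + mu Y + mu Z + mu W = mu a \<and>
     mu f dvd e2 (mu X) (mu Y) (mu Z) (mu W) + (mu W)^2 + (nu a)^2"
    unfolding eq_iff_munu[OF sC a] mu_s nui ..
  have e: "X+Y+Z-W = ?s" by simp
  show ?thesis unfolding e by (rule fin)
qed

end

context gsetup
begin

lemma card_T4:
  assumes "\<And>X Y Z W. X \<in> T \<Longrightarrow> Y \<in> T \<Longrightarrow> Z \<in> T \<Longrightarrow> W \<in> T \<Longrightarrow> \<Phi> X Y Z W = \<Psi> (mu X) (mu Y) (mu Z) (mu W)"
  shows "card {(X,Y,Z,W). X \<in> T \<and> Y \<in> T \<and> Z \<in> T \<and> W \<in> T \<and> \<Phi> X Y Z W} =
         card {(x,y,z,w). x \<in> F.CF \<and> y \<in> F.CF \<and> z \<in> F.CF \<and> w \<in> F.CF \<and> \<Psi> x y z w}"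
proof -
  define L where "L = inv_into T mu"
  have inj: "inj_on mu T" and im: "mu ` T = F.CF" using bij_T' by (auto simp: bij_betw_def)
  have L1: "L x \<in> T" if "x \<in> F.CF" for x unfolding L_def using that im by (metis inv_into_into)
  have L2: "mu (L x) = x" if "x \<in> F.CF" for x unfolding L_def using that im by (metis f_inv_into_f)
  have L3: "L (mu X) = X" if "X \<in> T" for X unfolding L_def by (rule inv_into_f_f[OF inj that])
  show ?thesis
  proof (rule card_bij_param[where \<psi>="\<lambda>(X,Y,Z,W). (mu X, mu Y, mu Z, mu W)" and \<phi>="\<lambda>(x,y,z,w). (L x, L y, L z, L w)"])
    show "\<forall>t\<in>{(X,Y,Z,W). X \<in> T \<and> Y \<in> T \<and> Z \<in> T \<and> W \<in> T \<and> \<Phi> X Y Z W}.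
        (\<lambda>(X,Y,Z,W). (mu X, mu Y, mu Z, mu W)) t \<in> {(x,y,z,w). x \<in> F.CF \<and> y \<in> F.CF \<and> z \<in> F.CF \<and> w \<in> F.CF \<and> \<Psi> x y z w}"
      using assms mu_T by auto
    show "\<forall>s\<in>{(x,y,z,w). x \<in> F.CF \<and> y \<in> F.CF \<and> z \<in> F.CF \<and> w \<in> F.CF \<and> \<Psi> x y z w}.
        (\<lambda>(x,y,z,w). (L x, L y, L z, L w)) s \<in> {(X,Y,Z,W). X \<in> T \<and> Y \<in> T \<and> Z \<in> T \<and> W \<in> T \<and> \<Phi> X Y Z W}"
      using assms L1 L2 by auto
    show "\<forall>t\<in>{(X,Y,Z,W). X \<in> T \<and> Y \<in> T \<and> Z \<in> T \<and> W \<in> T \<and> \<Phi> X Y Z W}.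
        (\<lambda>(x,y,z,w). (L x, L y, L z, L w)) ((\<lambda>(X,Y,Z,W). (mu X, mu Y, mu Z, mu W)) t) = t"
      using L3 by auto
    show "\<forall>s\<in>{(x,y,z,w). x \<in> F.CF \<and> y \<in> F.CF \<and> z \<in> F.CF \<and> w \<in> F.CF \<and> \<Psi> x y z w}.
        (\<lambda>(X,Y,Z,W). (mu X, mu Y, mu Z, mu W)) ((\<lambda>(x,y,z,w). (L x, L y, L z, L w)) s) = s"
      using L2 by auto
  qed
qed

lemma S4_eq: "{(x,y,z,w). x \<in> F.CF \<and> y \<in> F.CF \<and> z \<in> F.CF \<and> w \<in> F.CF \<and> (x+y+z+w = \<alpha> \<and> P x y z w)} = F.S4 \<alpha> P"
  unfolding F.S4_def by simp

lemma pow2m: "(2::nat)^(2*m) = (2^m)^2"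
  unfolding mult.commute[of 2 m] power_mult ..

lemma main_a: assumes a: "a \<in> C"
  shows "card {(X,Y,Z,W). X \<in> T \<and> Y \<in> T \<and> Z \<in> T \<and> W \<in> T \<and> X + Y + Z + W = a} =
    (if mu a = 0 then (if nu a = 0 then 2^m else 2^m * (2^m + 1)) else 2^(2*m))"
proof -
  have "card {(X,Y,Z,W). X \<in> T \<and> Y \<in> T \<and> Z \<in> T \<and> W \<in> T \<and> X + Y + Z + W = a} =
     card {(x,y,z,w). x \<in> F.CF \<and> y \<in> F.CF \<and> z \<in> F.CF \<and> w \<in> F.CF \<and> (x+y+z+w = mu a \<and> mu f dvd e2 x y z w + (nu a)^2)}"
    by (rule card_T4) (rule cond_a[OF _ _ _ _ a])
  also have "\<dots> = card (F.S4 (mu a) (\<lambda>x y z w. mu f dvd e2 x y z w + (nu a)^2))" unfolding S4_eq ..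
  also have "\<dots> = (if mu a = 0 then (if mu f dvd (nu a)^2 then 2^m else 2^m*(2^m+1)) else (2^m)^2)"
    by (rule F.count_a[OF mu_C'[OF a]])
  finally show ?thesis using nu0_iff[OF a] pow2m by simp
qed

lemma main_b: assumes a: "a \<in> C"
  shows "card {(X,Y,Z,W). X \<in> T \<and> Y \<in> T \<and> Z \<in> T \<and> W \<in> T \<and> X + Y - Z - W = a} =
    (if mu a = 0 then (if nu a = 0 then (2*2^m - 1)*2^m else (2^m - 1)*2^m) else 2^(2*m))"
proof -
  have "card {(X,Y,Z,W). X \<in> T \<and> Y \<in> T \<and> Z \<in> T \<and> W \<in> T \<and> X + Y - Z - W = a} =
     card {(x,y,z,w). x \<in> F.CF \<and> y \<in> F.CF \<and> z \<in> F.CF \<and> w \<in> F.CF \<and> (x+y+z+w = mu a \<and> mu f dvd e2 x y z w + z^2 + w^2 + (nu a)^2)}"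
    by (rule card_T4) (rule cond_b[OF _ _ _ _ a])
  also have "\<dots> = card (F.S4 (mu a) (\<lambda>x y z w. mu f dvd e2 x y z w + z^2 + w^2 + (nu a)^2))" unfolding S4_eq ..
  also have "\<dots> = (if mu a = 0 then (if mu f dvd (nu a)^2 then (2*2^m - 1)*2^m else (2^m - 1)*2^m) else (2^m)^2)"
    by (rule F.count_b[OF mu_C'[OF a]])
  finally show ?thesis using nu0_iff[OF a] pow2m by simp
qed

lemma main_c: assumes a: "a \<in> C"
  shows "card {(X,Y,Z,W). X \<in> T \<and> Y \<in> T \<and> Z \<in> T \<and> W \<in> T \<and> X + Y + Z - W = a} =
    (if mu a = 0 then 2^(2*m) else if (\<exists>z\<in>F.CF. mu f dvd z^2 + mu a * z + (nu a)^2) then (2^m + 1)*2^m else (2^m - 1)*2^m)"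
proof -
  have "card {(X,Y,Z,W). X \<in> T \<and> Y \<in> T \<and> Z \<in> T \<and> W \<in> T \<and> X + Y + Z - W = a} =
     card {(x,y,z,w). x \<in> F.CF \<and> y \<in> F.CF \<and> z \<in> F.CF \<and> w \<in> F.CF \<and> (x+y+z+w = mu a \<and> mu f dvd e2 x y z w + w^2 + (nu a)^2)}"
    by (rule card_T4) (rule cond_c[OF _ _ _ _ a])
  also have "\<dots> = card (F.S4 (mu a) (\<lambda>x y z w. mu f dvd e2 x y z w + w^2 + (nu a)^2))" unfolding S4_eq ..
  also have "\<dots> = (if mu a = 0 then (2^m)^2 else if (\<exists>z\<in>F.CF. mu f dvd z^2 + mu a * z + (nu a)^2) then (2^m+1)*2^m else (2^m - 1)*2^m)"
    by (rule F.count_c[OF mu_C'[OF a]])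
  finally show ?thesis using pow2m by simp
qed

lemma zero_T: "0 \<in> T" unfolding T_eq by simp

lemma twoR_iff: "a \<in> twoR f \<longleftrightarrow> a \<in> C \<and> mu a = 0"
proof
  assume "a \<in> twoR f"
  then obtain x where x: "x \<in> C" "a = gr_red f (2 * x)" unfolding twoR_def by auto
  have "2 * x \<in> C" using C_smult[OF x(1)] by (simp add: numeral_mult_conv_smult)
  then have "a = 2 * x" using x(2) gr_red_id by simp
  then show "a \<in> C \<and> mu a = 0" using \<open>2 * x \<in> C\<close> mu_2mult by simp
next
  assume a: "a \<in> C \<and> mu a = 0"
  define t where "t = map_poly hl a"
  have tC: "t \<in> C" unfolding t_def C_iff using a C_iff degree_map_poly_le by (meson le_less_trans)
  have "a = smult 2 t" unfolding t_def using poly_even a by simp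
  then have "a = 2 * t" by (simp add: numeral_mult_conv_smult)
  then have "a = gr_red f (2 * t)" using gr_red_id a by simp
  then show "a \<in> twoR f" unfolding twoR_def using tC by blast
qed

lemma TT_C: "a \<in> {x + y | x y. x \<in> T \<and> y \<in> T} \<Longrightarrow> a \<in> C"
  using T_C C_add by blast

lemma TT_iff: assumes a: "a \<in> C"
  shows "a \<in> {x + y | x y. x \<in> T \<and> y \<in> T} \<longleftrightarrow> (\<exists>z\<in>F.CF. mu f dvd z^2 + mu a * z + (nu a)^2)"
proof -
  have key: "X + Y = a \<longleftrightarrow> mu X + mu Y = mu a \<and> mu f dvd mu X * mu Y + (nu a)^2" if "X \<in> T" "Y \<in> T" for X Y
    using cond_a[OF that zero_T zero_T a] by (simp add: e2_def)
  show ?thesis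
  proof
    assume "a \<in> {x + y | x y. x \<in> T \<and> y \<in> T}"
    then obtain X Y where XY: "X \<in> T" "Y \<in> T" "a = X + Y" by blast
    then have k: "mu X + mu Y = mu a" "mu f dvd mu X * mu Y + (nu a)^2" using key by auto
    have "mu Y = mu a + mu X" using k(1) by (metis add.commute z2p_add_self2)
    then have "mu X * mu Y = (mu X)^2 + mu a * mu X" by (simp add: algebra_simps power2_eq_square)
    then show "\<exists>z\<in>F.CF. mu f dvd z^2 + mu a * z + (nu a)^2" using k(2) mu_T[OF XY(1)] by auto
  next
    assume "\<exists>z\<in>F.CF. mu f dvd z^2 + mu a * z + (nu a)^2"
    then obtain x where x: "x \<in> F.CF" "mu f dvd x^2 + mu a * x + (nu a)^2" by blast
    have y: "mu a + x \<in> F.CF" using x(1) mu_C'[OF a] by simp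
    obtain X where X: "X \<in> T" "mu X = x" using bij_T' x(1) by (metis bij_betw_imp_surj_on imageE)
    obtain Y where Y: "Y \<in> T" "mu Y = mu a + x" using bij_T' y by (metis bij_betw_imp_surj_on imageE)
    have "mu X * mu Y = x^2 + mu a * x" using X(2) Y(2) by (simp add: algebra_simps power2_eq_square)
    then have "X + Y = a" using key[OF X(1) Y(1)] X(2) Y(2) x(2) by simp
    then show "a \<in> {x + y | x y. x \<in> T \<and> y \<in> T}" using X(1) Y(1) by blast
  qed
qed

end

theorem corollaryB4:
  fixes f \<beta> :: "z4 poly" and m :: nat
  assumes "lead_coeff f = 1" and "degree f = m"
    and "irreducible (map_poly red2 f)"
    and "odd m"
    and "gr_has_order f \<beta> (2 ^ m - 1)"
  defines "T \<equiv> teich f \<beta>"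
  defines "TT \<equiv> {x + y | x y. x \<in> T \<and> y \<in> T}"
  shows
   "(card {(X,Y,Z,W). X \<in> T \<and> Y \<in> T \<and> Z \<in> T \<and> W \<in> T \<and> X + Y + Z + W = 0} = 2 ^ m) \<and>
    (\<forall>a \<in> twoR f - {0}. card {(X,Y,Z,W). X \<in> T \<and> Y \<in> T \<and> Z \<in> T \<and> W \<in> T \<and> X + Y + Z + W = a}
        = 2 ^ m * (2 ^ m + 1)) \<and>
    (\<forall>a \<in> gr_carrier f - twoR f. card {(X,Y,Z,W). X \<in> T \<and> Y \<in> T \<and> Z \<in> T \<and> W \<in> T \<and> X + Y + Z + W = a}
        = 2 ^ (2 * m)) \<and>
    (card {(X,Y,Z,W). X \<in> T \<and> Y \<in> T \<and> Z \<in> T \<and> W \<in> T \<and> X + Y - Z - W = 0} = (2 ^ (m + 1) - 1) * 2 ^ m) \<and>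
    (\<forall>a \<in> twoR f - {0}. card {(X,Y,Z,W). X \<in> T \<and> Y \<in> T \<and> Z \<in> T \<and> W \<in> T \<and> X + Y - Z - W = a}
        = (2 ^ m - 1) * 2 ^ m) \<and>
    (\<forall>a \<in> gr_carrier f - twoR f. card {(X,Y,Z,W). X \<in> T \<and> Y \<in> T \<and> Z \<in> T \<and> W \<in> T \<and> X + Y - Z - W = a}
        = 2 ^ (2 * m)) \<and>
    (\<forall>a \<in> twoR f. card {(X,Y,Z,W). X \<in> T \<and> Y \<in> T \<and> Z \<in> T \<and> W \<in> T \<and> X + Y + Z - W = a}
        = 2 ^ (2 * m)) \<and>
    (\<forall>a \<in> TT - twoR f. card {(X,Y,Z,W). X \<in> T \<and> Y \<in> T \<and> Z \<in> T \<and> W \<in> T \<and> X + Y + Z - W = a}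
        = (2 ^ m + 1) * 2 ^ m) \<and>
    (\<forall>a \<in> gr_carrier f - TT. card {(X,Y,Z,W). X \<in> T \<and> Y \<in> T \<and> Z \<in> T \<and> W \<in> T \<and> X + Y + Z - W = a}
        = (2 ^ m - 1) * 2 ^ m)"
proof -
  interpret G: gsetup f \<beta> m using assms(1-5) by unfold_locales
  have mu0: "mu 0 = 0" by simp
  have nz: "G.nu a \<noteq> 0" if "a \<in> gr_carrier f" "a \<noteq> 0" "mu a = 0" for a
  proof
    assume "G.nu a = 0"
    then have "a = 0" using G.inj_munu[OF that(1) G.C_0] that(3) G.nu_0 by simp
    then show False using that(2) by simp
  qed
  have p2: "(2::nat) ^ (m + 1) = 2 * 2^m" by simp
  show ?thesis unfolding TT_def T_def
  proof (intro conjI ballI)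
    show "card {(X,Y,Z,W). X \<in> teich f \<beta> \<and> Y \<in> teich f \<beta> \<and> Z \<in> teich f \<beta> \<and> W \<in> teich f \<beta> \<and> X + Y + Z + W = 0} = 2 ^ m"
      using G.main_a[OF G.C_0] G.nu_0 by simp
    show "card {(X,Y,Z,W). X \<in> teich f \<beta> \<and> Y \<in> teich f \<beta> \<and> Z \<in> teich f \<beta> \<and> W \<in> teich f \<beta> \<and> X + Y - Z - W = 0} = (2 ^ (m + 1) - 1) * 2 ^ m"
      using G.main_b[OF G.C_0] G.nu_0 p2 by simp
  next
    fix a assume a: "a \<in> twoR f - {0}"
    then have aC: "a \<in> gr_carrier f" and mu: "mu a = 0" using G.twoR_iff by auto
    have "G.nu a \<noteq> 0" using nz aC mu a by auto
    then show "card {(X,Y,Z,W). X \<in> teich f \<beta> \<and> Y \<in> teich f \<beta> \<and> Z \<in> teich f \<beta> \<and> W \<in> teich f \<beta> \<and> X + Y + Z + W = a} = 2 ^ m * (2 ^ m + 1)"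
      using G.main_a[OF aC] mu by simp
  next
    fix a assume a: "a \<in> twoR f - {0}"
    then have aC: "a \<in> gr_carrier f" and mu: "mu a = 0" using G.twoR_iff by auto
    have "G.nu a \<noteq> 0" using nz aC mu a by auto
    then show "card {(X,Y,Z,W). X \<in> teich f \<beta> \<and> Y \<in> teich f \<beta> \<and> Z \<in> teich f \<beta> \<and> W \<in> teich f \<beta> \<and> X + Y - Z - W = a} = (2 ^ m - 1) * 2 ^ m"
      using G.main_b[OF aC] mu by simp
  next
    fix a assume a: "a \<in> gr_carrier f - twoR f"
    then have aC: "a \<in> gr_carrier f" and mu: "mu a \<noteq> 0" using G.twoR_iff by auto
    show "card {(X,Y,Z,W). X \<in> teich f \<beta> \<and> Y \<in> teich f \<beta> \<and> Z \<in> teich f \<beta> \<and> W \<in> teich f \<beta> \<and> X + Y + Z + W = a} = 2 ^ (2 * m)"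
      using G.main_a[OF aC] mu by simp
  next
    fix a assume a: "a \<in> gr_carrier f - twoR f"
    then have aC: "a \<in> gr_carrier f" and mu: "mu a \<noteq> 0" using G.twoR_iff by auto
    show "card {(X,Y,Z,W). X \<in> teich f \<beta> \<and> Y \<in> teich f \<beta> \<and> Z \<in> teich f \<beta> \<and> W \<in> teich f \<beta> \<and> X + Y - Z - W = a} = 2 ^ (2 * m)"
      using G.main_b[OF aC] mu by simp
  next
    fix a assume a: "a \<in> twoR f"
    then have aC: "a \<in> gr_carrier f" and mu: "mu a = 0" using G.twoR_iff by auto
    show "card {(X,Y,Z,W). X \<in> teich f \<beta> \<and> Y \<in> teich f \<beta> \<and> Z \<in> teich f \<beta> \<and> W \<in> teich f \<beta> \<and> X + Y + Z - W = a} = 2 ^ (2 * m)"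
      using G.main_c[OF aC] mu by simp
  next
    fix a assume a: "a \<in> {x + y |x y. x \<in> teich f \<beta> \<and> y \<in> teich f \<beta>} - twoR f"
    then have aC: "a \<in> gr_carrier f" using G.TT_C by blast
    then have mu: "mu a \<noteq> 0" using a G.twoR_iff by auto
    have ex: "\<exists>z\<in>G.F.CF. mu f dvd z^2 + mu a * z + (G.nu a)^2" using a G.TT_iff[OF aC] by blast
    show "card {(X,Y,Z,W). X \<in> teich f \<beta> \<and> Y \<in> teich f \<beta> \<and> Z \<in> teich f \<beta> \<and> W \<in> teich f \<beta> \<and> X + Y + Z - W = a} = (2 ^ m + 1) * 2 ^ m"
      using G.main_c[OF aC] mu ex by simp
  next
    fix a assume a: "a \<in> gr_carrier f - {x + y |x y. x \<in> teich f \<beta> \<and> y \<in> teich f \<beta>}"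
    then have aC: "a \<in> gr_carrier f" by blast
    have nex: "\<not> (\<exists>z\<in>G.F.CF. mu f dvd z^2 + mu a * z + (G.nu a)^2)" using a G.TT_iff[OF aC] by blast
    have mu: "mu a \<noteq> 0"
    proof
      assume "mu a = 0"
      then have "mu f dvd (G.nu a)^2 + mu a * G.nu a + (G.nu a)^2" by simp
      then show False using nex G.nu_CF[OF aC] by blast
    qed
    show "card {(X,Y,Z,W). X \<in> teich f \<beta> \<and> Y \<in> teich f \<beta> \<and> Z \<in> teich f \<beta> \<and> W \<in> teich f \<beta> \<and> X + Y + Z - W = a} = (2 ^ m - 1) * 2 ^ m"
      using G.main_c[OF aC] mu nex by simp
  qed
qed

end
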